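(* Let $\alpha\in(0,1)$ and let $\mathbb{Z}$ act on the circle $\mathbb{T}^1=\mathbb{R}/\mathbb{Z}$ by $n.z=z+n\alpha$. Then the warped cone $(t\mathbb{T}^1,d_{\mathbb{Z}})_{t>0}$ is quasi-isometric to the family of tori $(\mathbb{T}^2,\tau d)_{\tau>0}$ if and only if $\alpha$ is a restricted irrational number.
   Context: $\mathbb{T}^1$ carries its standard quotient metric $d$ (circumference $1$) and $\mathbb{T}^2=\mathbb{R}^2/\mathbb{Z}^2$ its standard flat metric $d$; $\tau d$ denotes the metric scaled by $\tau$. $\mathbb{Z}$ is generated by $S=\{\pm1\}$. For $t>0$, $d_{\mathbb{Z}}$ is the largest metric on $\mathbb{T}^1$ with $d_{\mathbb{Z}}(z,z')\le t\,d(z,z')$ and $d_{\mathbb{Z}}(z,z\pm\alpha)\le 1$. Families $\mathcal{X},\mathcal{Y}$ of metric spaces are quasi-isometric if there are an index set $I$, surjections $i\mapsto X_i\in\mathcal{X}$, $i\mapsto Y_i\in\mathcal{Y}$, and maps $f_i:X_i\to Y_i$ which are $(C,A)$-quasi-isometries (i.e. $C^{-1}d-A\le d(f_i\cdot,f_i\cdot)\le Cd+A$ and $A$-neighbourhood of the image is everything) with $C,A$ independent of $i$. An irrational number $\alpha=[a_0;a_1,a_2,\dots]$ (continued fraction expansion) is restricted if the sequence $(a_i)$ is bounded. *)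

theory Defs
  imports "HOL-Analysis.Analysis"
begin

text \<open>The circle T^1 = R/Z is represented by the carrier {0..<1} of real numbers;
  a point x of R is identified with its class frac x.\<close>

definition T1 :: "real set" where
  "T1 = {0..<1}"

definition T2 :: "(real \<times> real) set" where
  "T2 = {0..<1} \<times> {0..<1}"

definition dT1 :: "real \<Rightarrow> real \<Rightarrow> real" where
  "dT1 x y = (INF k\<in>(\<int>::real set). \<bar>x - y - k\<bar>)"

definition dT2 :: "real \<times> real \<Rightarrow> real \<times> real \<Rightarrow> real" where
  "dT2 p q = sqrt ((dT1 (fst p) (fst q))\<^sup>2 + (dT1 (snd p) (snd q))\<^sup>2)"

definition metric_on :: "'a set \<Rightarrow> ('a \<Rightarrow> 'a \<Rightarrow> real) \<Rightarrow> bool" where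
  "metric_on S \<rho> \<longleftrightarrow>
     (\<forall>x\<in>S. \<forall>y\<in>S. 0 \<le> \<rho> x y \<and> (\<rho> x y = 0 \<longleftrightarrow> x = y) \<and> \<rho> x y = \<rho> y x) \<and>
     (\<forall>x\<in>S. \<forall>y\<in>S. \<forall>z\<in>S. \<rho> x z \<le> \<rho> x y + \<rho> y z)"

definition warp_admissible :: "real \<Rightarrow> real \<Rightarrow> (real \<Rightarrow> real \<Rightarrow> real) \<Rightarrow> bool" where
  "warp_admissible \<alpha> t \<rho> \<longleftrightarrow> metric_on T1 \<rho> \<and>
     (\<forall>z\<in>T1. \<forall>z'\<in>T1. \<rho> z z' \<le> t * dT1 z z') \<and>
     (\<forall>z\<in>T1. \<rho> z (frac (z + \<alpha>)) \<le> 1 \<and> \<rho> z (frac (z - \<alpha>)) \<le> 1)"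

definition warped_dist :: "real \<Rightarrow> real \<Rightarrow> real \<Rightarrow> real \<Rightarrow> real" where
  "warped_dist \<alpha> t x y = (SUP \<rho>\<in>{\<rho>. warp_admissible \<alpha> t \<rho>}. \<rho> x y)"

definition quasi_isometry ::
  "'a set \<Rightarrow> ('a \<Rightarrow> 'a \<Rightarrow> real) \<Rightarrow> 'b set \<Rightarrow> ('b \<Rightarrow> 'b \<Rightarrow> real) \<Rightarrow> real \<Rightarrow> real \<Rightarrow> ('a \<Rightarrow> 'b) \<Rightarrow> bool" where
  "quasi_isometry X dX Y dY C A f \<longleftrightarrow>
     f ` X \<subseteq> Y \<and>
     (\<forall>x\<in>X. \<forall>x'\<in>X. dX x x' / C - A \<le> dY (f x) (f x') \<and> dY (f x) (f x') \<le> C * dX x x' + A) \<and>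
     (\<forall>y\<in>Y. \<exists>x\<in>X. dY (f x) y \<le> A)"

text \<open>Quasi-isometry of the warped cone family (T^1, d_Z^t)_{t>0} and the torus family
  (T^2, tau d)_{tau>0}: an index set I, surjections onto the parameter sets (hence onto the
  families), and uniform (C,A)-quasi-isometries.\<close>
definition warped_cone_QI_tori :: "real \<Rightarrow> bool" where
  "warped_cone_QI_tori \<alpha> \<longleftrightarrow>
     (\<exists>(I::(real \<times> real) set) C A. C > 0 \<and> A \<ge> 0 \<and>
        fst ` I = {0<..} \<and> snd ` I = {0<..} \<and>
        (\<forall>(t,\<tau>)\<in>I. \<exists>f. quasi_isometry T1 (warped_dist \<alpha> t) T2 (\<lambda>p q. \<tau> * dT2 p q) C A f))"

text \<open>Continued fraction expansion alpha = [a0; a1, a2, ...]: complete quotients and partial quotients.\<close>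
fun cf_rem :: "real \<Rightarrow> nat \<Rightarrow> real" where
  "cf_rem x 0 = x"
| "cf_rem x (Suc n) = 1 / frac (cf_rem x n)"

definition cf_coeff :: "real \<Rightarrow> nat \<Rightarrow> int" where
  "cf_coeff x n = \<lfloor>cf_rem x n\<rfloor>"

definition restricted_irrational :: "real \<Rightarrow> bool" where
  "restricted_irrational \<alpha> \<longleftrightarrow> \<alpha> \<notin> \<rat> \<and> (\<exists>B. \<forall>n. \<bar>cf_coeff \<alpha> n\<bar> \<le> B)"

end

theory Submission
  imports Defs
begin

definition nd :: "real \<Rightarrow> real" where "nd z = \<bar>z - of_int (round z)\<bar>"

lemma nd_le: "k \<in> \<int> \<Longrightarrow> nd z \<le> \<bar>z - k\<bar>"
  unfolding nd_def by (metis Ints_cases round_diff_minimal)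

lemma nd_nonneg: "0 \<le> nd z" by (simp add: nd_def)

lemma nd_half: "nd z \<le> 1/2"
  unfolding nd_def
  by (smt (verit, best) of_int_round_ge of_int_round_le)

lemma dT1_nd: "dT1 x y = nd (x - y)"
proof -
  have "(INF k\<in>(\<int>::real set). \<bar>x - y - k\<bar>) = nd (x - y)"
    unfolding image_def
    apply (rule cInf_eq_minimum)
    apply (auto simp: nd_def intro!: nd_le[unfolded nd_def])
    done
  thus ?thesis by (simp add: dT1_def)
qed

lemma nd_plus_int: "k \<in> \<int> \<Longrightarrow> nd (z + k) = nd z"
proof -
  assume k: "k \<in> \<int>"
  have "nd (z + k) \<le> nd z"
    using nd_le[of "of_int (round z) + k" "z + k"] k by (auto simp: nd_def)
  moreover have "nd z \<le> nd (z + k)"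
    using nd_le[of "of_int (round (z+k)) - k" z] k by (auto simp: nd_def)
  ultimately show ?thesis by simp
qed

lemma nd_minus_int: "k \<in> \<int> \<Longrightarrow> nd (z - k) = nd z"
  using nd_plus_int[of "-k" z] by simp

lemma nd_neg: "nd (-z) = nd z"
proof -
  have "nd (-z) \<le> nd z"
    using nd_le[of "- of_int (round z)" "-z"] by (auto simp: nd_def)
  moreover have "nd z \<le> nd (-z)"
    using nd_le[of "- of_int (round (-z))" "z"] by (auto simp: nd_def)
  ultimately show ?thesis by simp
qed

lemma nd_add: "nd (z + w) \<le> nd z + nd w"
proof -
  have "nd (z + w) \<le> \<bar>z + w - (of_int (round z) + of_int (round w))\<bar>"
    by (rule nd_le) auto
  also have "\<dots> \<le> nd z + nd w" unfolding nd_def by simp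
  finally show ?thesis .
qed

lemma nd_sub: "nd (z - w) \<le> nd z + nd w"
  using nd_add[of z "-w"] nd_neg[of w] by simp

lemma nd_le_abs: "nd z \<le> \<bar>z\<bar>"
  using nd_le[of 0 z] by simp

lemma nd_mult_int: "n \<in> \<int> \<Longrightarrow> nd (n * z) \<le> \<bar>n\<bar> * nd z"
proof -
  assume n: "n \<in> \<int>"
  have "nd (n * z) \<le> \<bar>n * z - n * of_int (round z)\<bar>"
    by (rule nd_le) (use n in auto)
  also have "\<dots> = \<bar>n\<bar> * nd z" unfolding nd_def
    by (simp add: abs_mult right_diff_distrib[symmetric])
  finally show ?thesis .
qed

lemma nd_zero_iff: "nd z = 0 \<longleftrightarrow> z \<in> \<int>"
proof
  assume "nd z = 0" thus "z \<in> \<int>" unfolding nd_def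
    by (metis abs_eq_0 eq_iff_diff_eq_0 Ints_of_int)
next
  assume "z \<in> \<int>" thus "nd z = 0" using nd_le[of z z] nd_nonneg[of z] by simp
qed

lemma nd_frac: "nd (frac u - v) = nd (u - v)"
proof -
  have "frac u - v = (u - v) - of_int \<lfloor>u\<rfloor>" by (simp add: frac_def)
  hence "nd (frac u - v) = nd ((u - v) - of_int \<lfloor>u\<rfloor>)" by (rule arg_cong)
  also have "\<dots> = nd (u - v)" by (rule nd_minus_int) simp
  finally show ?thesis .
qed

lemma nd_frac2: "nd (v - frac u) = nd (v - u)"
  using nd_frac[of u v] nd_neg by (metis minus_diff_eq)

lemma dT1_frac1: "dT1 (frac u) v = dT1 u v" by (simp add: dT1_nd nd_frac)
lemma dT1_frac2: "dT1 v (frac u) = dT1 v u" by (simp add: dT1_nd nd_frac2)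

lemma dT1_triangle: "dT1 x z \<le> dT1 x y + dT1 y z"
  unfolding dT1_nd using nd_add[of "x - y" "y - z"] by simp

lemma dT1_sym: "dT1 x y = dT1 y x"
  unfolding dT1_nd by (metis minus_diff_eq nd_neg)

lemma T1_eq: "x \<in> T1 \<Longrightarrow> y \<in> T1 \<Longrightarrow> dT1 x y = 0 \<Longrightarrow> x = y"
proof -
  assume x: "x \<in> T1" and y: "y \<in> T1" and d: "dT1 x y = 0"
  then have "x - y \<in> \<int>" by (simp add: dT1_nd nd_zero_iff)
  then obtain k where k: "x - y = of_int k" by (auto elim: Ints_cases)
  from x y have "-1 < x - y" "x - y < 1" by (auto simp: T1_def)
  with k have "k = 0" by (smt (verit) of_int_less_1_iff of_int_less_iff of_int_minus)
  with k show "x = y" by simp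
qed

lemma dT2_nd: "dT2 p q = sqrt ((nd (fst p - fst q))\<^sup>2 + (nd (snd p - snd q))\<^sup>2)"
  by (simp add: dT2_def dT1_nd)

lemma sqrt_triangle: "sqrt ((a + b)\<^sup>2 + (c + d)\<^sup>2) \<le> sqrt (a\<^sup>2 + c\<^sup>2) + sqrt (b\<^sup>2 + d\<^sup>2)"
proof -
  have "norm ((a,c) + (b,d)) \<le> norm (a,c) + norm (b,d)" by (rule norm_triangle_ineq)
  thus ?thesis by (simp add: norm_Pair)
qed

lemma dT2_triangle: "dT2 p r \<le> dT2 p q + dT2 q r"
proof -
  have m: "sqrt (x1\<^sup>2 + y1\<^sup>2) \<le> sqrt (x2\<^sup>2 + y2\<^sup>2)" if "0 \<le> x1" "x1 \<le> x2" "0 \<le> y1" "y1 \<le> y2"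
    for x1 x2 y1 y2 :: real
    using that by (intro real_sqrt_le_mono add_mono power_mono) auto
  show ?thesis unfolding dT2_def
    apply (rule order_trans[OF m sqrt_triangle])
    using dT1_triangle dT1_nd nd_nonneg by auto
qed

lemma dT2_sym: "dT2 p q = dT2 q p" by (simp add: dT2_def dT1_sym)
lemma dT2_nonneg: "0 \<le> dT2 p q" by (simp add: dT2_def)
lemma dT2_le_sum: "dT2 p q \<le> dT1 (fst p) (fst q) + dT1 (snd p) (snd q)"
  unfolding dT2_def dT1_nd
  by (rule real_sqrt_sum_squares_triangle_ineq[of _ 0 0, simplified, THEN order_trans]) (auto simp: nd_nonneg)
lemma dT2_ge1: "dT1 (fst p) (fst q) \<le> dT2 p q" unfolding dT2_def by (simp add: real_sqrt_sum_squares_ge1)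
lemma dT2_ge2: "dT1 (snd p) (snd q) \<le> dT2 p q" unfolding dT2_def by (simp add: real_sqrt_sum_squares_ge2)
lemma dT2_le1: "dT2 p q \<le> 1"
proof -
  have "dT2 p q \<le> dT1 (fst p) (fst q) + dT1 (snd p) (snd q)" by (rule dT2_le_sum)
  also have "\<dots> \<le> 1" using nd_half by (simp add: dT1_nd) (smt (verit) nd_half)
  finally show ?thesis .
qed


definition pseudo_ok :: "real \<Rightarrow> real \<Rightarrow> (real \<Rightarrow> real \<Rightarrow> real) \<Rightarrow> bool" where
  "pseudo_ok \<alpha> t \<rho> \<longleftrightarrow>
     (\<forall>x\<in>T1. \<forall>y\<in>T1. 0 \<le> \<rho> x y \<and> \<rho> x y = \<rho> y x) \<and>
     (\<forall>x\<in>T1. \<forall>y\<in>T1. \<forall>z\<in>T1. \<rho> x z \<le> \<rho> x y + \<rho> y z) \<and>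
     (\<forall>z\<in>T1. \<forall>z'\<in>T1. \<rho> z z' \<le> t * dT1 z z') \<and>
     (\<forall>z\<in>T1. \<rho> z (frac (z + \<alpha>)) \<le> 1 \<and> \<rho> z (frac (z - \<alpha>)) \<le> 1)"

definition mu :: "real \<Rightarrow> real \<Rightarrow> real \<Rightarrow> real" where
  "mu t x y = min (t * dT1 x y) 1"

lemma frac_T1: "frac u \<in> T1" by (simp add: T1_def frac_lt_1)

lemma mu_adm: assumes "t > 0" shows "warp_admissible \<alpha> t (mu t)"
proof -
  have tri: "mu t x z \<le> mu t x y + mu t y z" for x y z
  proof -
    have "t * dT1 x z \<le> t * dT1 x y + t * dT1 y z"
      using dT1_triangle[of x z y] assms by (simp add: distrib_left[symmetric])
    moreover have "0 \<le> t * dT1 a b" for a b using assms by (simp add: dT1_nd nd_nonneg)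
    ultimately show ?thesis unfolding mu_def by (smt (verit))
  qed
  have pos: "mu t x y = 0 \<longleftrightarrow> x = y" if "x \<in> T1" "y \<in> T1" for x y
  proof
    assume "mu t x y = 0"
    then have "t * dT1 x y = 0" unfolding mu_def by (simp add: min_def split: if_splits)
    then have "dT1 x y = 0" using assms by simp
    then show "x = y" using T1_eq[OF that] by simp
  next
    assume "x = y" then show "mu t x y = 0" by (simp add: mu_def dT1_nd nd_def)
  qed
  have sym: "mu t x y = mu t y x" for x y by (simp add: mu_def dT1_sym)
  have nn: "0 \<le> mu t x y" for x y using assms by (simp add: mu_def dT1_nd nd_nonneg)
  have le: "mu t x y \<le> t * dT1 x y" "mu t x y \<le> 1" for x y by (simp_all add: mu_def)
  show ?thesis unfolding warp_admissible_def metric_on_def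
    using tri pos sym nn le by blast
qed

lemma adm_bdd: assumes "warp_admissible \<alpha> t \<rho>" "x \<in> T1" "y \<in> T1"
  shows "\<rho> x y \<le> t * dT1 x y"
  using assms by (auto simp: warp_admissible_def)

lemma W_ge: assumes "warp_admissible \<alpha> t \<rho>" "x \<in> T1" "y \<in> T1"
  shows "\<rho> x y \<le> warped_dist \<alpha> t x y"
  unfolding warped_dist_def
  apply (rule cSUP_upper)
  using assms adm_bdd[OF _ assms(2,3)] by (auto simp: bdd_above_def)

lemma adm_iter:
  assumes "warp_admissible \<alpha> t \<rho>" "x \<in> T1"
  shows "\<rho> x (frac (x + real i * \<alpha>)) \<le> real i \<and> \<rho> x (frac (x - real i * \<alpha>)) \<le> real i"
proof (induction i)
  case 0
  have "\<rho> x x = 0" using assms by (auto simp: warp_admissible_def metric_on_def)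
  moreover have "frac x = x" using assms(2) by (simp add: T1_def frac_eq)
  ultimately show ?case by simp
next
  case (Suc i)
  let ?u = "frac (x + real i * \<alpha>)" and ?v = "frac (x - real i * \<alpha>)"
  have tri: "\<And>a b c. a \<in> T1 \<Longrightarrow> b \<in> T1 \<Longrightarrow> c \<in> T1 \<Longrightarrow> \<rho> a c \<le> \<rho> a b + \<rho> b c"
    using assms by (auto simp: warp_admissible_def metric_on_def)
  have jj: "\<forall>z\<in>T1. \<rho> z (frac (z + \<alpha>)) \<le> 1 \<and> \<rho> z (frac (z - \<alpha>)) \<le> 1"
    using assms(1) unfolding warp_admissible_def by blast
  have j1: "\<rho> ?u (frac (?u + \<alpha>)) \<le> 1" "\<rho> ?v (frac (?v - \<alpha>)) \<le> 1"
    using bspec[OF jj frac_T1[of "x + real i * \<alpha>"]] bspec[OF jj frac_T1[of "x - real i * \<alpha>"]]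
    by blast+
  have e1: "frac (?u + \<alpha>) = frac (x + real (Suc i) * \<alpha>)"
    by (simp add: algebra_simps)
  have e2: "frac (?v - \<alpha>) = frac (x - real (Suc i) * \<alpha>)"
    using frac_add_simps(1)[of "x - real i * \<alpha>" "-\<alpha>"] by (simp add: algebra_simps)
  have t1: "\<rho> x (frac (?u + \<alpha>)) \<le> \<rho> x ?u + \<rho> ?u (frac (?u + \<alpha>))"
    by (rule tri[OF assms(2) frac_T1 frac_T1])
  have t2: "\<rho> x (frac (?v - \<alpha>)) \<le> \<rho> x ?v + \<rho> ?v (frac (?v - \<alpha>))"
    by (rule tri[OF assms(2) frac_T1 frac_T1])
  have A: "\<rho> x (frac (x + real (Suc i) * \<alpha>)) \<le> real (Suc i)"
    unfolding e1[symmetric] using t1 j1(1) conjunct1[OF Suc.IH] by simp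
  have B: "\<rho> x (frac (x - real (Suc i) * \<alpha>)) \<le> real (Suc i)"
    unfolding e2[symmetric] using t2 j1(2) conjunct2[OF Suc.IH] by simp
  show ?case using A B by blast
qed

lemma adm_jump:
  assumes "warp_admissible \<alpha> t \<rho>" "x \<in> T1" "j \<in> \<int>"
  shows "\<rho> x (frac (x + j * \<alpha>)) \<le> \<bar>j\<bar>"
proof -
  obtain k where k: "j = of_int k" using assms(3) by (auto elim: Ints_cases)
  show ?thesis
  proof (cases "k \<ge> 0")
    case True
    then have "j = real (nat k)" using k by simp
    then show ?thesis using adm_iter[OF assms(1,2), of "nat k"] True k by simp
  next
    case False
    then have "j = - real (nat (-k))" using k by simp
    then show ?thesis using adm_iter[OF assms(1,2), of "nat (-k)"] False k by simp
  qed
qed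

lemma W_le: assumes "t > 0" "x \<in> T1" "y \<in> T1" "j \<in> \<int>"
  shows "warped_dist \<alpha> t x y \<le> \<bar>j\<bar> + t * nd (x + j * \<alpha> - y)"
  unfolding warped_dist_def
proof (rule cSUP_least)
  show "{\<rho>. warp_admissible \<alpha> t \<rho>} \<noteq> {}" using mu_adm[OF assms(1)] by auto
next
  fix \<rho> assume "\<rho> \<in> {\<rho>. warp_admissible \<alpha> t \<rho>}"
  then have a: "warp_admissible \<alpha> t \<rho>" by simp
  let ?u = "frac (x + j * \<alpha>)"
  have "\<rho> x y \<le> \<rho> x ?u + \<rho> ?u y"
    using a assms frac_T1 by (auto simp: warp_admissible_def metric_on_def)
  also have "\<dots> \<le> \<bar>j\<bar> + t * dT1 ?u y"
    using adm_jump[OF a assms(2,4)] adm_bdd[OF a frac_T1[of "x + j * \<alpha>"] assms(3)] by linarith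
  also have "dT1 ?u y = nd (x + j * \<alpha> - y)" using dT1_frac1[of "x + j * \<alpha>" y] by (simp only: dT1_nd)
  finally show "\<rho> x y \<le> \<bar>j\<bar> + t * nd (x + j * \<alpha> - y)" .
qed

lemma W_le_t: assumes "t > 0" "x \<in> T1" "y \<in> T1"
  shows "warped_dist \<alpha> t x y \<le> t * dT1 x y"
  using W_le[OF assms, of 0] by (simp add: dT1_nd)

lemma W_nonneg: assumes "t > 0" "x \<in> T1" "y \<in> T1"
  shows "0 \<le> warped_dist \<alpha> t x y"
proof -
  have "0 \<le> mu t x y" using assms by (simp add: mu_def dT1_nd nd_nonneg)
  also have "\<dots> \<le> warped_dist \<alpha> t x y" by (rule W_ge[OF mu_adm[OF assms(1)] assms(2,3)])
  finally show ?thesis .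
qed

lemma convex_le: "a \<le> c \<Longrightarrow> b \<le> d \<Longrightarrow> 0 \<le> s \<Longrightarrow> s \<le> 1 \<Longrightarrow>
   (1 - s) * a + s * b \<le> (1 - s) * c + s * (d::real)"
  by (intro add_mono mult_left_mono) auto

lemma convex_le1: "a \<le> 1 \<Longrightarrow> b \<le> 1 \<Longrightarrow> 0 \<le> s \<Longrightarrow> s \<le> 1 \<Longrightarrow>
   (1 - s) * a + s * b \<le> (1::real)"
  using convex_le[of a 1 b 1 s] by simp

lemma W_ge_pseudo:
  assumes t: "t > 0" and p: "pseudo_ok \<alpha> t \<rho>" and x: "x \<in> T1" and y: "y \<in> T1"
  shows "\<rho> x y \<le> warped_dist \<alpha> t x y"
proof (rule ccontr)
  assume "\<not> ?thesis"
  then have lt: "warped_dist \<alpha> t x y < \<rho> x y" by simp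
  define s where "s = (\<rho> x y - warped_dist \<alpha> t x y) / (2 * (\<rho> x y + 1))"
  have W0: "0 \<le> warped_dist \<alpha> t x y" by (rule W_nonneg[OF t x y])
  have r0: "0 \<le> \<rho> x y" using p x y unfolding pseudo_ok_def by blast
  have s0: "0 < s" unfolding s_def using lt r0 by auto
  have s1: "s < 1" unfolding s_def using lt r0 W0 by (simp add: field_simps)
  define \<sigma> where "\<sigma> = (\<lambda>a b. (1 - s) * \<rho> a b + s * mu t a b)"
  have madm: "warp_admissible \<alpha> t (mu t)" by (rule mu_adm[OF t])
  have "warp_admissible \<alpha> t \<sigma>"
    unfolding warp_admissible_def metric_on_def
  proof (intro conjI ballI)
    fix a b assume a: "a \<in> T1" and b: "b \<in> T1"
    have "0 \<le> \<rho> a b" "\<rho> a b = \<rho> b a" using p a b unfolding pseudo_ok_def by blast+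
    moreover have "0 \<le> mu t a b" "mu t a b = mu t b a" "mu t a b = 0 \<longleftrightarrow> a = b"
      using madm a b unfolding warp_admissible_def metric_on_def by blast+
    moreover have "\<rho> a a = 0"
    proof -
      have "\<rho> a a \<le> t * dT1 a a" "0 \<le> \<rho> a a" using p a unfolding pseudo_ok_def by blast+
      moreover have "dT1 a a = 0" by (simp add: dT1_nd nd_def)
      ultimately show ?thesis by simp
    qed
    ultimately show "0 \<le> \<sigma> a b" "\<sigma> a b = \<sigma> b a" "\<sigma> a b = 0 \<longleftrightarrow> a = b"
      unfolding \<sigma>_def using s0 s1 by (auto simp: add_nonneg_eq_0_iff)
    have "\<rho> a b \<le> t * dT1 a b" using p a b unfolding pseudo_ok_def by blast
    moreover have "mu t a b \<le> t * dT1 a b" by (simp add: mu_def)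
    ultimately
    show "\<sigma> a b \<le> t * dT1 a b" unfolding \<sigma>_def using s0 s1
      convex_le[of "\<rho> a b" "t * dT1 a b" "mu t a b" "t * dT1 a b" s] by (simp add: algebra_simps)
  next
    fix a b c assume a: "a \<in> T1" and b: "b \<in> T1" and c: "c \<in> T1"
    have "\<rho> a c \<le> \<rho> a b + \<rho> b c" using p a b c unfolding pseudo_ok_def by blast
    moreover have "mu t a c \<le> mu t a b + mu t b c"
      using madm a b c unfolding warp_admissible_def metric_on_def by blast
    ultimately show "\<sigma> a c \<le> \<sigma> a b + \<sigma> b c" unfolding \<sigma>_def using s0 s1
      convex_le[of "\<rho> a c" "\<rho> a b + \<rho> b c" "mu t a c" "mu t a b + mu t b c" s] by (simp add: algebra_simps)
  next
    fix z assume z: "z \<in> T1"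
    have "\<rho> z (frac (z + \<alpha>)) \<le> 1" "\<rho> z (frac (z - \<alpha>)) \<le> 1" using p z unfolding pseudo_ok_def by blast+
    moreover have "mu t z (frac (z + \<alpha>)) \<le> 1" "mu t z (frac (z - \<alpha>)) \<le> 1" by (auto simp: mu_def)
    ultimately show "\<sigma> z (frac (z + \<alpha>)) \<le> 1" "\<sigma> z (frac (z - \<alpha>)) \<le> 1"
      unfolding \<sigma>_def using s0 s1 by (auto intro!: convex_le1)
  qed
  then have "\<sigma> x y \<le> warped_dist \<alpha> t x y" by (rule W_ge[OF _ x y])
  moreover have "0 \<le> mu t x y" using madm x y unfolding warp_admissible_def metric_on_def by blast
  moreover have "0 \<le> s * mu t x y" using s0 \<open>0 \<le> mu t x y\<close> by simp
  ultimately have A: "(1 - s) * \<rho> x y \<le> warped_dist \<alpha> t x y" unfolding \<sigma>_def by linarith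
  have q: "\<rho> x y / (2 * (\<rho> x y + 1)) < 1" using r0 by (simp add: field_simps)
  have "s * \<rho> x y = (\<rho> x y - warped_dist \<alpha> t x y) * (\<rho> x y / (2 * (\<rho> x y + 1)))"
    by (simp add: s_def)
  also have "\<dots> < (\<rho> x y - warped_dist \<alpha> t x y) * 1"
    by (rule mult_strict_left_mono[OF q]) (use lt in simp)
  finally have B: "s * \<rho> x y < \<rho> x y - warped_dist \<alpha> t x y" by simp
  have "(1 - s) * \<rho> x y = \<rho> x y - s * \<rho> x y" by (simp add: algebra_simps)
  with A B show False by linarith
qed


fun PP :: "real \<Rightarrow> nat \<Rightarrow> int" where
  "PP a 0 = 1"
| "PP a (Suc 0) = cf_coeff a 0"
| "PP a (Suc (Suc k)) = cf_coeff a (Suc k) * PP a (Suc k) + PP a k"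

fun QQ :: "real \<Rightarrow> nat \<Rightarrow> int" where
  "QQ a 0 = 0"
| "QQ a (Suc 0) = 1"
| "QQ a (Suc (Suc k)) = cf_coeff a (Suc k) * QQ a (Suc k) + QQ a k"

definition dd :: "real \<Rightarrow> nat \<Rightarrow> real" where
  "dd a k = of_int (QQ a k) * a - of_int (PP a k)"

lemma irr_frac: "x \<notin> \<rat> \<Longrightarrow> frac x \<notin> \<rat>"
proof
  assume "x \<notin> \<rat>" "frac x \<in> \<rat>"
  then have "frac x + of_int \<lfloor>x\<rfloor> \<in> \<rat>" by (intro Rats_add) auto
  then show False using \<open>x \<notin> \<rat>\<close> by (simp add: frac_def)
qed

lemma irr_inv: assumes "x \<notin> \<rat>" shows "1 / x \<notin> \<rat>"
proof
  assume h: "1 / x \<in> \<rat>"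
  have "1 / (1 / x) \<in> \<rat>" using Rats_divide[OF Rats_1 h] .
  then show False using assms by simp
qed

declare cf_rem.simps(2)[simp del]

context
  fixes \<alpha> :: real
  assumes irr: "\<alpha> \<notin> \<rat>"
begin

lemma cf_irr: "cf_rem \<alpha> k \<notin> \<rat>"
proof (induction k)
  case 0 then show ?case using irr by simp
next
  case (Suc k) then show ?case unfolding cf_rem.simps(2) by (intro irr_inv irr_frac)
qed

lemma frac_pos: "0 < frac (cf_rem \<alpha> k)"
proof -
  have "cf_rem \<alpha> k \<notin> \<int>" using cf_irr[of k] Ints_subset_Rats by blast
  then show ?thesis by simp
qed

lemma cf_gt1: "1 < cf_rem \<alpha> (Suc k)"
proof -
  have f: "0 < frac (cf_rem \<alpha> k)" "frac (cf_rem \<alpha> k) < 1"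
    using frac_pos[of k] frac_lt_1[of "cf_rem \<alpha> k"] by auto
  have "1 / 1 < 1 / frac (cf_rem \<alpha> k)"
    by (rule divide_strict_left_mono) (use f in auto)
  then show ?thesis by (simp add: cf_rem.simps(2))
qed

lemma cf_coeff_pos: "1 \<le> cf_coeff \<alpha> (Suc k)"
  using cf_gt1[of k] unfolding cf_coeff_def by (simp add: le_floor_iff)

lemma cf_step: "cf_rem \<alpha> k - of_int (cf_coeff \<alpha> k) = 1 / cf_rem \<alpha> (Suc k)"
  by (simp add: cf_coeff_def frac_def cf_rem.simps(2))

lemma dd_rec: "dd \<alpha> (Suc (Suc k)) = of_int (cf_coeff \<alpha> (Suc k)) * dd \<alpha> (Suc k) + dd \<alpha> k"
  by (simp add: dd_def algebra_simps)

lemma dd_rel: "dd \<alpha> k = - cf_rem \<alpha> (Suc k) * dd \<alpha> (Suc k)"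
proof (induction k)
  case 0
  have "dd \<alpha> 1 = 1 / cf_rem \<alpha> 1" using cf_step[of 0] by (simp add: dd_def)
  moreover have "cf_rem \<alpha> 1 > 0" using cf_gt1[of 0] by simp
  ultimately show ?case by (simp add: dd_def)
next
  case (Suc k)
  have x: "cf_rem \<alpha> (Suc (Suc k)) > 0" using cf_gt1[of "Suc k"] by simp
  have "dd \<alpha> (Suc (Suc k)) = (of_int (cf_coeff \<alpha> (Suc k)) - cf_rem \<alpha> (Suc k)) * dd \<alpha> (Suc k)"
    using dd_rec[of k] Suc.IH by (simp add: algebra_simps)
  also have "\<dots> = - (1 / cf_rem \<alpha> (Suc (Suc k))) * dd \<alpha> (Suc k)"
    using cf_step[of "Suc k"] by (simp add: algebra_simps)
  finally show ?case using x by (simp add: field_simps)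
qed

lemma dd_nz: "dd \<alpha> k \<noteq> 0"
proof (induction k)
  case 0 then show ?case by (simp add: dd_def)
next
  case (Suc k) then show ?case using dd_rel[of k] by auto
qed

lemma det: "QQ \<alpha> (Suc k) * PP \<alpha> k - QQ \<alpha> k * PP \<alpha> (Suc k) = (-1) ^ k"
proof (induction k)
  case 0 then show ?case by simp
next
  case (Suc k)
  have "QQ \<alpha> (Suc (Suc k)) * PP \<alpha> (Suc k) - QQ \<alpha> (Suc k) * PP \<alpha> (Suc (Suc k))
        = - (QQ \<alpha> (Suc k) * PP \<alpha> k - QQ \<alpha> k * PP \<alpha> (Suc k))"
    by (simp add: algebra_simps)
  then show ?case using Suc.IH by simp
qed

lemma QQ_props: "0 \<le> QQ \<alpha> k \<and> 1 \<le> QQ \<alpha> (Suc k) \<and> QQ \<alpha> k \<le> QQ \<alpha> (Suc k) \<and> (k \<ge> 1 \<longrightarrow> 1 \<le> QQ \<alpha> k)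
   \<and> int k \<le> QQ \<alpha> (Suc k) + 1 \<and> (k \<ge> 1 \<longrightarrow> int k \<le> QQ \<alpha> (Suc k))"
proof (induction k)
  case 0 then show ?case by simp
next
  case (Suc k)
  have a: "1 \<le> cf_coeff \<alpha> (Suc k)" by (rule cf_coeff_pos)
  have q: "QQ \<alpha> (Suc (Suc k)) = cf_coeff \<alpha> (Suc k) * QQ \<alpha> (Suc k) + QQ \<alpha> k" by simp
  have "QQ \<alpha> (Suc k) \<le> cf_coeff \<alpha> (Suc k) * QQ \<alpha> (Suc k)"
    using a Suc.IH by (simp add: mult_le_cancel_right1)
  then have ge: "QQ \<alpha> (Suc (Suc k)) \<ge> QQ \<alpha> (Suc k) + QQ \<alpha> k" using q by linarith
  have "int (Suc k) \<le> QQ \<alpha> (Suc (Suc k))"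
  proof (cases "k = 0")
    case True then show ?thesis using ge Suc.IH by simp
  next
    case False
    then have "1 \<le> QQ \<alpha> k" using Suc.IH by simp
    then show ?thesis using ge Suc.IH False by linarith
  qed
  note c3 = this
  have i1: "0 \<le> QQ \<alpha> k" and i2: "1 \<le> QQ \<alpha> (Suc k)" using Suc.IH by blast+
  have c1: "0 \<le> QQ \<alpha> (Suc k)" using i2 by simp
  have c2: "1 \<le> QQ \<alpha> (Suc (Suc k))" using ge i1 i2 by linarith
  have c4: "QQ \<alpha> (Suc k) \<le> QQ \<alpha> (Suc (Suc k))" using ge i1 by linarith
  have c5: "int (Suc k) \<le> QQ \<alpha> (Suc (Suc k)) + 1" using c3 by simp
  show ?case using c1 c2 c3 c4 c5 i2 by (intro conjI impI) assumption+
qed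

lemma QQ_nonneg: "0 \<le> QQ \<alpha> k" using QQ_props[of k] by auto
lemma QQ_pos: "1 \<le> QQ \<alpha> (Suc k)" using QQ_props[of k] by auto
lemma QQ_mono: "QQ \<alpha> k \<le> QQ \<alpha> (Suc k)" using QQ_props[of k] by auto
lemma QQ_ge: "int k \<le> QQ \<alpha> (Suc k) + 1" using QQ_props[of k] by auto

lemma abs_combo: "a = - x * b \<Longrightarrow> x > 0 \<Longrightarrow> c \<ge> 0 \<Longrightarrow> d \<ge> 0 \<Longrightarrow>
    \<bar>a * c - b * d\<bar> = \<bar>a\<bar> * c + \<bar>b\<bar> * (d::real)"
proof -
  assume h: "a = - x * b" "x > 0" "c \<ge> 0" "d \<ge> 0"
  then have 1: "a * c - b * d = - b * (x * c + d)" by (simp add: algebra_simps)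
  have 2: "x * c + d \<ge> 0" using h by simp
  have "\<bar>a * c - b * d\<bar> = \<bar>b\<bar> * (x * c + d)" unfolding 1 abs_mult abs_minus_cancel using 2 by simp
  also have "\<dots> = \<bar>a\<bar> * c + \<bar>b\<bar> * d" unfolding h(1) abs_mult using h by (simp add: algebra_simps)
  finally show ?thesis .
qed

lemma dd_sum: "\<bar>dd \<alpha> k\<bar> * of_int (QQ \<alpha> (Suc k)) + \<bar>dd \<alpha> (Suc k)\<bar> * of_int (QQ \<alpha> k) = 1"
proof -
  have e: "dd \<alpha> k * of_int (QQ \<alpha> (Suc k)) - dd \<alpha> (Suc k) * of_int (QQ \<alpha> k)
        = - of_int (QQ \<alpha> (Suc k) * PP \<alpha> k - QQ \<alpha> k * PP \<alpha> (Suc k))"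
    by (simp add: dd_def algebra_simps)
  have "\<bar>dd \<alpha> k * of_int (QQ \<alpha> (Suc k)) - dd \<alpha> (Suc k) * of_int (QQ \<alpha> k)\<bar> = 1"
    unfolding e det by simp
  moreover have "\<bar>dd \<alpha> k * of_int (QQ \<alpha> (Suc k)) - dd \<alpha> (Suc k) * of_int (QQ \<alpha> k)\<bar>
     = \<bar>dd \<alpha> k\<bar> * of_int (QQ \<alpha> (Suc k)) + \<bar>dd \<alpha> (Suc k)\<bar> * of_int (QQ \<alpha> k)"
    by (rule abs_combo[OF dd_rel]) (use less_trans[OF zero_less_one cf_gt1[of k]] QQ_nonneg[of k] QQ_nonneg[of "Suc k"] in auto)
  ultimately show ?thesis by simp
qed

lemma dd_bound: "\<bar>dd \<alpha> k\<bar> * of_int (QQ \<alpha> (Suc k)) \<le> 1"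
proof -
  have "0 \<le> \<bar>dd \<alpha> (Suc k)\<bar> * of_int (QQ \<alpha> k)"
    using QQ_nonneg[of k] by simp
  then show ?thesis using dd_sum[of k] by linarith
qed

lemma dd_bound2: "of_int (QQ \<alpha> (Suc k)) * \<bar>dd \<alpha> (Suc k)\<bar> * cf_rem \<alpha> (Suc k) \<le> 1"
proof -
  have "\<bar>dd \<alpha> k\<bar> = cf_rem \<alpha> (Suc k) * \<bar>dd \<alpha> (Suc k)\<bar>"
    using dd_rel[of k] cf_gt1[of k] by (simp add: abs_mult)
  then show ?thesis using dd_bound[of k] by (simp add: algebra_simps)
qed

lemma coprime_PQ: "coprime (PP \<alpha> (Suc k)) (QQ \<alpha> (Suc k))"
proof -
  have "QQ \<alpha> (Suc (Suc k)) * PP \<alpha> (Suc k) - QQ \<alpha> (Suc k) * PP \<alpha> (Suc (Suc k)) = (-1) ^ Suc k"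
    by (rule det)
  then have "is_unit (QQ \<alpha> (Suc (Suc k)) * PP \<alpha> (Suc k) - QQ \<alpha> (Suc k) * PP \<alpha> (Suc (Suc k)))"
    by simp
  show ?thesis
  proof (rule coprimeI)
    fix c assume c: "c dvd PP \<alpha> (Suc k)" "c dvd QQ \<alpha> (Suc k)"
    then have "c dvd QQ \<alpha> (Suc (Suc k)) * PP \<alpha> (Suc k) - QQ \<alpha> (Suc k) * PP \<alpha> (Suc (Suc k))"
      using dvd_diff[OF dvd_mult[OF c(1), of "QQ \<alpha> (Suc (Suc k))"] dvd_mult2[OF c(2), of "PP \<alpha> (Suc (Suc k))"]]
      by (simp only: mult.commute)
    then show "is_unit c" using \<open>is_unit _\<close> dvd_unit_imp_unit by blast
  qed
qed

end

lemma circle_pack: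
  fixes G :: "'a set" and \<phi> :: "'a \<Rightarrow> real"
  assumes fin: "finite G" and d: "d > 0"
    and sep: "\<And>i j. i \<in> G \<Longrightarrow> j \<in> G \<Longrightarrow> i \<noteq> j \<Longrightarrow> d \<le> nd (\<phi> i - \<phi> j)"
  shows "real (card G) \<le> 1 / d + 1"
proof -
  define bin where "bin i = nat \<lfloor>frac (\<phi> i) / d\<rfloor>" for i
  define N where "N = nat \<lceil>1 / d\<rceil>"
  have binlow: "real (bin i) * d \<le> frac (\<phi> i)" "frac (\<phi> i) < (real (bin i) + 1) * d" for i
  proof -
    have nn: "0 \<le> frac (\<phi> i) / d" using d by simp
    then have e: "real (bin i) = of_int \<lfloor>frac (\<phi> i) / d\<rfloor>" unfolding bin_def by simp
    have fl: "of_int \<lfloor>frac (\<phi> i) / d\<rfloor> \<le> frac (\<phi> i) / d" by (rule of_int_floor_le)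
    show "real (bin i) * d \<le> frac (\<phi> i)" using fl unfolding pos_le_divide_eq[OF d] e .
    have fl2: "frac (\<phi> i) / d < of_int \<lfloor>frac (\<phi> i) / d\<rfloor> + 1" by (rule real_of_int_floor_add_one_gt)
    show "frac (\<phi> i) < (real (bin i) + 1) * d" using fl2 unfolding pos_divide_less_eq[OF d] e .
  qed
  have inj: "inj_on bin G"
  proof (rule inj_onI)
    fix i j assume i: "i \<in> G" and j: "j \<in> G" and b: "bin i = bin j"
    show "i = j"
    proof (rule ccontr)
      assume "i \<noteq> j"
      then have "d \<le> nd (\<phi> i - \<phi> j)" using sep i j by blast
      also have "nd (\<phi> i - \<phi> j) = nd (frac (\<phi> i) - frac (\<phi> j))"
        using nd_frac[of "\<phi> i" "frac (\<phi> j)"] nd_frac2[of "\<phi> i" "\<phi> j"] by simp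
      also have "\<dots> \<le> \<bar>frac (\<phi> i) - frac (\<phi> j)\<bar>" by (rule nd_le_abs)
      also have "\<dots> < d" using binlow[of i] binlow[of j] b by (simp add: algebra_simps abs_less_iff)
      finally show False by simp
    qed
  qed
  have sub: "bin ` G \<subseteq> {..<N}"
  proof
    fix b assume "b \<in> bin ` G"
    then obtain i where b: "b = bin i" by auto
    have "real (bin i) * d < 1" using binlow(1)[of i] frac_lt_1[of "\<phi> i"] by linarith
    then have "real (bin i) < 1 / d" using d by (simp add: pos_less_divide_eq)
    also have "1 / d \<le> of_int \<lceil>1 / d\<rceil>" by (rule le_of_int_ceiling)
    finally have "real (bin i) < of_int \<lceil>1/d\<rceil>" .
    then have "bin i < N" unfolding N_def by linarith
    then show "b \<in> {..<N}" using b by simp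
  qed
  have "card G = card (bin ` G)" using card_image[OF inj] by simp
  also have "\<dots> \<le> card {..<N}" by (rule card_mono) (use sub in auto)
  finally have "card G \<le> N" by simp
  then have "real (card G) \<le> real N" by simp
  also have "real N = of_int \<lceil>1/d\<rceil>" unfolding N_def using d by simp
  also have "\<dots> \<le> 1/d + 1" by linarith
  finally show ?thesis .
qed

lemma grid_sep:
  fixes i k m :: nat
  assumes "i < m" "k < m" "i \<noteq> k"
  shows "1 / real m \<le> nd (real i / real m - real k / real m)"
proof -
  have m: "real m > 0" using assms by simp
  define r where "r = round (real i / real m - real k / real m)"
  have "nd (real i / real m - real k / real m) = \<bar>real i / real m - real k / real m - of_int r\<bar>"
    by (simp add: nd_def r_def)
  also have "real i / real m - real k / real m - of_int r = (of_int (int i - int k - r * int m)) / real m"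
    using m by (simp add: field_simps)
  finally have e: "nd (real i / real m - real k / real m) = \<bar>of_int (int i - int k - r * int m)\<bar> / real m"
    using m by simp
  have nz: "int i - int k - r * int m \<noteq> 0"
  proof
    assume h: "int i - int k - r * int m = 0"
    show False
    proof (cases "r = 0")
      case True then show False using h assms by simp
    next
      case False
      then have "1 \<le> \<bar>r\<bar>" by linarith
      then have "int m \<le> \<bar>r\<bar> * int m" by (simp add: mult_le_cancel_right1)
      then have "\<bar>r * int m\<bar> \<ge> int m" by (simp add: abs_mult)
      moreover have "\<bar>int i - int k\<bar> < int m" using assms by auto
      ultimately show False using h by simp
    qed
  qed
  then have "1 \<le> \<bar>of_int (int i - int k - r * int m)::real\<bar>" by linarith
  then show ?thesis unfolding e using m by (simp add: divide_right_mono)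
qed


definition lamC :: "real \<Rightarrow> real" where
  "lamC C = 2*C*(4+3*C) + 16*C*(3+3*C) + 2 + 64*C^2*(3+3*C)^2"

lemma thin_arith:
  fixes C E A L \<tau> m :: real
  assumes C: "C > 0" and E: "E \<ge> 1" "A \<le> E" and A: "A \<ge> 0" and L: "L > 0"
    and tau: "\<tau> \<ge> L/(2*C) - A" and m0: "m \<ge> 0" and m1: "m \<ge> \<tau> / (3*A + 3*C*E) - 1"
    and m2: "m^2 \<le> L/(2*E) + 1"
  shows "L \<le> lamC C * E"
proof (rule ccontr)
  assume "\<not> ?thesis"
  then have big: "L > lamC C * E" by simp
  define g where "g = 3 + 3*C"
  have g: "g \<ge> 3" "g > 0" using C by (auto simp: g_def)
  have E0: "E > 0" using E by simp
  have parts: "lamC C * E \<ge> 16*C*g*E" "lamC C * E \<ge> 2*E" "lamC C * E \<ge> 64*C^2*g^2*E"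
    using C E0 unfolding lamC_def g_def by (simp_all add: algebra_simps mult_nonneg_nonneg)
  have L1: "L \<ge> 16*C*g*E" "L \<ge> 2*E" "L > 64*C^2*g^2*E" using big parts by linarith+
  have CE: "C * E > 0" using C E0 by simp
  have G0: "3*A + 3*C*E \<le> g*E" "3*A + 3*C*E > 0"
    using E A CE unfolding g_def by (simp_all add: algebra_simps)
  have "4*C*E \<le> 16*C*g*E" using C g E0 by (simp add: mult_right_mono)
  then have L4: "L \<ge> 4*C*E" using L1 by linarith
  have "E \<le> L/(4*C)" using L4 C by (simp add: field_simps)
  then have "L/(4*C) \<le> L/(2*C) - E" using C by (simp add: field_simps)
  then have tau4: "\<tau> \<ge> L/(4*C)" using tau E by linarith
  have pos4: "L/(4*C) > 0" using L C by simp
  have gE: "0 \<le> g*E" using g E0 by simp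
  have "L/(4*C) / (g*E) \<le> \<tau> / (g*E)" by (rule divide_right_mono[OF tau4 gE])
  also have "\<tau> / (g*E) \<le> \<tau> / (3*A + 3*C*E)"
    using G0 tau4 pos4 by (intro divide_left_mono) (auto simp: g)
  finally have "L/(4*C*g*E) \<le> \<tau> / (3*A + 3*C*E)" by (simp add: field_simps)
  then have m3: "m \<ge> L/(4*C*g*E) - 1" using m1 by linarith
  have "16*C*g*E/(8*C*g*E) \<le> L/(8*C*g*E)" using L1 C g E0 by (intro divide_right_mono) auto
  then have two: "L/(8*C*g*E) \<ge> 2" using C g E0 by simp
  have "L/(4*C*g*E) = 2 * (L/(8*C*g*E))" by (simp add: field_simps)
  then have m4: "m \<ge> L/(8*C*g*E)" using m3 two by linarith
  have "(L/(8*C*g*E))^2 \<le> m^2" using m4 two by (intro power_mono) auto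
  also have "\<dots> \<le> L/(2*E) + 1" by (rule m2)
  also have "\<dots> \<le> L/E" using L1 E0 by (simp add: field_simps)
  finally have "(L/(8*C*g*E))^2 \<le> L/E" .
  then have "L^2 / (64*C^2*g^2*E^2) \<le> L/E" by (simp add: power_divide power_mult_distrib)
  then have "L^2 \<le> L/E * (64*C^2*g^2*E^2)" using C g E0 by (simp add: pos_divide_le_eq)
  also have "\<dots> = L * (64*C^2*g^2*E)" using E0 by (simp add: power2_eq_square field_simps)
  finally have "L * L \<le> L * (64*C^2*g^2*E)" by (simp add: power2_eq_square)
  then have "L \<le> 64*C^2*g^2*E" using L by simp
  then show False using L1 by linarith
qed

lemma nd_half_exact: "nd (-(1/2)) = 1/2"
  by (simp add: nd_def round_def)

lemma thin:
  fixes dX :: "real \<Rightarrow> real \<Rightarrow> real" and f :: "real \<Rightarrow> real \<times> real"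
  assumes C: "C > 0" and A: "A \<ge> 0" and tau: "\<tau> > 0" and n: "n \<ge> 1" and L: "L > 0"
    and E: "E \<ge> A" "E \<ge> 1"
    and qi: "quasi_isometry T1 dX T2 (\<lambda>p q. \<tau> * dT2 p q) C A f"
    and bnd: "\<And>x y. x \<in> T1 \<Longrightarrow> y \<in> T1 \<Longrightarrow>
               L * nd (n * (x - y)) \<le> dX x y \<and> dX x y \<le> L * nd (n * (x - y)) + E"
  shows "L \<le> lamC C * E"
proof -
  have lo: "\<And>x x'. x \<in> T1 \<Longrightarrow> x' \<in> T1 \<Longrightarrow> dX x x' / C - A \<le> \<tau> * dT2 (f x) (f x')"
    and up: "\<And>x x'. x \<in> T1 \<Longrightarrow> x' \<in> T1 \<Longrightarrow> \<tau> * dT2 (f x) (f x') \<le> C * dX x x' + A"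
    and cs: "\<forall>y\<in>T2. \<exists>x\<in>T1. \<tau> * dT2 (f x) y \<le> A"
    using qi unfolding quasi_isometry_def by auto
  define y0 where "y0 = 1 / (2 * n)"
  have y0: "y0 \<in> T1" using n unfolding y0_def T1_def by (auto simp: field_simps)
  have x0: "(0::real) \<in> T1" by (simp add: T1_def)
  have e: "n * (0 - y0) = - (1/2)" using n by (simp add: y0_def field_simps)
  have ndv: "nd (n * (0 - y0)) = 1/2" unfolding e by (rule nd_half_exact)
  have h: "L * nd (n * (0 - y0)) \<le> dX 0 y0" using bnd[OF x0 y0] by blast
  then have "L / 2 \<le> dX 0 y0" unfolding ndv by simp
  then have "L / (2 * C) - A \<le> dX 0 y0 / C - A" using C by (simp add: divide_right_mono flip: divide_divide_eq_left)
  also have "\<dots> \<le> \<tau> * dT2 (f 0) (f y0)" by (rule lo[OF x0 y0])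
  also have "\<dots> \<le> \<tau>" using dT2_le1[of "f 0" "f y0"] tau by simp
  finally have tauL: "L / (2 * C) - A \<le> \<tau>" .
  define G0 where "G0 = 3*A + 3*C*E"
  have G0pos: "G0 > 0" using A C E unfolding G0_def by (simp add: add_nonneg_pos)
  show ?thesis
  proof (cases "\<tau> < G0")
    case True
    then have "L / (2 * C) < G0 + A" using tauL by linarith
    then have "L < 2 * C * (G0 + A)" using C by (simp add: field_simps)
    also have "G0 + A \<le> (4 + 3*C) * E" unfolding G0_def using E C by (simp add: algebra_simps)
    then have "2 * C * (G0 + A) \<le> 2 * C * ((4 + 3*C) * E)" using C by simp
    also have "\<dots> \<le> lamC C * E"
      unfolding lamC_def using C E by (simp add: algebra_simps mult_nonneg_nonneg)
    finally show ?thesis by simp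
  next
    case False
    then have tG: "\<tau> \<ge> G0" by simp
    define m where "m = nat \<lfloor>\<tau> / G0\<rfloor>"
    have ge1: "\<tau> / G0 \<ge> 1" using tG G0pos by simp
    have mfl: "real m = of_int \<lfloor>\<tau> / G0\<rfloor>" unfolding m_def using ge1 by simp
    have m1: "real m \<ge> 1" using mfl ge1 by (simp add: le_floor_iff)
    have m_le: "real m \<le> \<tau> / G0" using mfl by simp
    have m_gt: "real m > \<tau> / G0 - 1" using mfl by linarith
    have mpos: "real m > 0" using m1 by simp
    have tm: "\<tau> / real m \<ge> G0" using m_le mpos G0pos by (simp add: field_simps)
    define Gd where "Gd = {0..<m} \<times> {0..<m}"
    define gp where "gp = (\<lambda>(i::nat, j::nat). (real i / real m, real j / real m))"
    have gpT: "gp ij \<in> T2" if "ij \<in> Gd" for ij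
      using that mpos unfolding Gd_def gp_def T2_def by (auto simp: field_simps)
    have "\<forall>ij\<in>Gd. \<exists>x\<in>T1. \<tau> * dT2 (f x) (gp ij) \<le> A" using cs gpT by blast
    then obtain xs where xs: "\<And>ij. ij \<in> Gd \<Longrightarrow> xs ij \<in> T1 \<and> \<tau> * dT2 (f (xs ij)) (gp ij) \<le> A"
      by metis
    have gsep: "1 / real m \<le> dT2 (gp ij) (gp kl)" if "ij \<in> Gd" "kl \<in> Gd" "ij \<noteq> kl" for ij kl
    proof -
      obtain i j k l where ij: "ij = (i, j)" and kl: "kl = (k, l)" by (cases ij, cases kl) auto
      have r: "i < m" "j < m" "k < m" "l < m" using that ij kl unfolding Gd_def by auto
      show ?thesis
      proof (cases "i = k")
        case False
        have "1 / real m \<le> nd (real i / real m - real k / real m)" by (rule grid_sep) (use r False in auto)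
        also have "\<dots> \<le> dT2 (gp ij) (gp kl)" using dT2_ge1[of "gp ij" "gp kl"] unfolding ij kl gp_def
          by (simp add: dT1_nd)
        finally show ?thesis .
      next
        case True
        then have "j \<noteq> l" using that ij kl by auto
        have "1 / real m \<le> nd (real j / real m - real l / real m)" by (rule grid_sep) (use r \<open>j \<noteq> l\<close> in auto)
        also have "\<dots> \<le> dT2 (gp ij) (gp kl)" using dT2_ge2[of "gp ij" "gp kl"] unfolding ij kl gp_def
          by (simp add: dT1_nd)
        finally show ?thesis .
      qed
    qed
    have sep: "2 * E / L \<le> nd (n * xs ij - n * xs kl)" if h: "ij \<in> Gd" "kl \<in> Gd" "ij \<noteq> kl" for ij kl
    proof -
      let ?x = "xs ij" and ?x' = "xs kl"
      have xT: "?x \<in> T1" "?x' \<in> T1" using xs h by auto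
      have "\<tau> / real m \<le> \<tau> * dT2 (gp ij) (gp kl)"
        using gsep[OF h] tau by (simp add: mult_left_mono divide_inverse flip: mult_1_right)
      also have "\<tau> * dT2 (gp ij) (gp kl) \<le>
          \<tau> * dT2 (f ?x) (gp ij) + \<tau> * dT2 (f ?x) (f ?x') + \<tau> * dT2 (f ?x') (gp kl)"
      proof -
        have "dT2 (gp ij) (gp kl) \<le> dT2 (gp ij) (f ?x) + dT2 (f ?x) (gp kl)" by (rule dT2_triangle)
        also have "dT2 (f ?x) (gp kl) \<le> dT2 (f ?x) (f ?x') + dT2 (f ?x') (gp kl)" by (rule dT2_triangle)
        finally have "dT2 (gp ij) (gp kl) \<le> dT2 (f ?x) (gp ij) + dT2 (f ?x) (f ?x') + dT2 (f ?x') (gp kl)"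
          using dT2_sym[of "gp ij" "f ?x"] by simp
        then show ?thesis using tau by (simp add: distrib_left[symmetric])
      qed
      also have "\<dots> \<le> A + (C * dX ?x ?x' + A) + A" using xs[OF h(1)] xs[OF h(2)] up[OF xT] by linarith
      finally have "G0 \<le> 3 * A + C * dX ?x ?x'" using tm by linarith
      then have "3 * C * E \<le> C * dX ?x ?x'" unfolding G0_def by linarith
      then have "3 * E \<le> dX ?x ?x'" using C by (simp add: mult_le_cancel_left_pos mult.assoc[symmetric] mult.commute[of 3 C])
      then have "2 * E \<le> L * nd (n * (?x - ?x'))" using bnd[OF xT] by linarith
      then have "2 * E / L \<le> nd (n * (?x - ?x'))" using L by (simp add: pos_divide_le_eq mult.commute)
      then show ?thesis by (simp add: right_diff_distrib)
    qed
    have dpos: "2 * E / L > 0" using E L by simp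
    have "real (card Gd) \<le> 1 / (2 * E / L) + 1"
      by (rule circle_pack[of Gd "2*E/L" "\<lambda>ij. n * xs ij"]) (use dpos sep in \<open>auto simp: Gd_def\<close>)
    moreover have "card Gd = m * m" unfolding Gd_def by simp
    ultimately have m2: "(real m)^2 \<le> L / (2 * E) + 1" by (simp add: power2_eq_square)
    show ?thesis
      by (rule thin_arith[OF C _ _ A L tauL _ _ m2]) (use E m_gt in \<open>auto simp: G0_def\<close>)
  qed
qed


lemma fiber_lower:
  fixes \<alpha> t :: real and n p :: int
  assumes t: "t > 0" and n: "n \<ge> 1" and tdel: "t * \<bar>of_int n * \<alpha> - of_int p\<bar> \<le> of_int n"
    and x: "x \<in> T1" and y: "y \<in> T1"
  shows "(t / of_int n) * nd (of_int n * (x - y)) \<le> warped_dist \<alpha> t x y"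
proof -
  let ?n = "real_of_int n"
  have npos: "?n > 0" using n by simp
  define \<rho> where "\<rho> = (\<lambda>a b. (t / ?n) * nd (?n * (a - b)))"
  have c0: "t / ?n > 0" using t npos by simp
  have jump: "nd (?n * (z - frac (z + s * \<alpha>))) \<le> \<bar>?n * \<alpha> - of_int p\<bar>" if s: "s = 1 \<or> s = -1" for z s
  proof -
    have "?n * (z - frac (z + s * \<alpha>)) = - s * (?n * \<alpha> - of_int p) - (s * of_int p) + of_int (n * \<lfloor>z + s * \<alpha>\<rfloor>)"
      by (simp add: frac_def algebra_simps)
    then have "nd (?n * (z - frac (z + s * \<alpha>))) = nd (- s * (?n * \<alpha> - of_int p) - (s * of_int p))"
      using nd_plus_int[of "of_int (n * \<lfloor>z + s * \<alpha>\<rfloor>)" "- s * (?n * \<alpha> - of_int p) - (s * of_int p)"] by simp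
    also have "\<dots> = nd (- s * (?n * \<alpha> - of_int p))"
      using s nd_minus_int[of "s * of_int p" "- s * (?n * \<alpha> - of_int p)"] by auto
    also have "\<dots> \<le> \<bar>- s * (?n * \<alpha> - of_int p)\<bar>" by (rule nd_le_abs)
    also have "\<dots> = \<bar>?n * \<alpha> - of_int p\<bar>" using s by (auto simp: abs_mult)
    finally show ?thesis .
  qed
  have "pseudo_ok \<alpha> t \<rho>"
    unfolding pseudo_ok_def
  proof (intro conjI ballI)
    fix a b assume "a \<in> T1" "b \<in> T1"
    show "0 \<le> \<rho> a b" unfolding \<rho>_def by (intro mult_nonneg_nonneg) (use c0 nd_nonneg in auto)
    show "\<rho> a b = \<rho> b a" unfolding \<rho>_def using nd_neg[of "?n * (a - b)"] by (simp add: algebra_simps)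
    have "nd (?n * (a - b)) \<le> \<bar>?n\<bar> * nd (a - b)" by (rule nd_mult_int) simp
    then have "(t / ?n) * nd (?n * (a - b)) \<le> (t / ?n) * (?n * nd (a - b))"
      using c0 npos by (intro mult_left_mono) auto
    then show "\<rho> a b \<le> t * dT1 a b" unfolding \<rho>_def dT1_nd using npos by simp
  next
    fix a b c assume "a \<in> T1" "b \<in> T1" "c \<in> T1"
    have "nd (?n * (a - c)) \<le> nd (?n * (a - b)) + nd (?n * (b - c))"
      using nd_add[of "?n * (a - b)" "?n * (b - c)"] by (simp add: algebra_simps)
    then have "(t / ?n) * nd (?n * (a - c)) \<le> (t / ?n) * (nd (?n * (a - b)) + nd (?n * (b - c)))"
      using c0 by (intro mult_left_mono) auto
    then show "\<rho> a c \<le> \<rho> a b + \<rho> b c" unfolding \<rho>_def by (simp only: distrib_left)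
  next
    fix z assume "z \<in> T1"
    have "\<rho> z (frac (z + 1 * \<alpha>)) \<le> (t / ?n) * \<bar>?n * \<alpha> - of_int p\<bar>"
      unfolding \<rho>_def using jump[of 1 z] c0 by (intro mult_left_mono) auto
    also have "\<dots> \<le> 1" using tdel npos by (simp add: field_simps)
    finally show "\<rho> z (frac (z + \<alpha>)) \<le> 1" by simp
    have "\<rho> z (frac (z + (-1) * \<alpha>)) \<le> (t / ?n) * \<bar>?n * \<alpha> - of_int p\<bar>"
      unfolding \<rho>_def using jump[of "-1" z] c0 by (intro mult_left_mono) auto
    also have "\<dots> \<le> 1" using tdel npos by (simp add: field_simps)
    finally show "\<rho> z (frac (z - \<alpha>)) \<le> 1" by simp
  qed
  from W_ge_pseudo[OF t this x y] show ?thesis unfolding \<rho>_def .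
qed

lemma fiber_upper:
  fixes \<alpha> t :: real and n p :: int
  assumes t: "t > 0" and n: "n \<ge> 1" and cop: "coprime p n"
    and tdel: "t * \<bar>of_int n * \<alpha> - of_int p\<bar> \<le> of_int n"
    and x: "x \<in> T1" and y: "y \<in> T1"
  shows "warped_dist \<alpha> t x y \<le> (t / of_int n) * nd (of_int n * (x - y)) + 2 * of_int n"
proof -
  let ?n = "real_of_int n"
  have npos: "?n > 0" using n by simp
  define \<delta> where "\<delta> = ?n * \<alpha> - of_int p"
  define K where "K = round (?n * (y - x))"
  define e where "e = ?n * (y - x) - of_int K"
  have e_nd: "\<bar>e\<bar> = nd (?n * (x - y))"
    using nd_neg[of "?n * (y - x)"] by (simp add: e_def K_def nd_def algebra_simps)
  obtain u v where uv: "u * p + v * n = gcd p n" using bezout_int by blast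
  then have uv1: "u * p + v * n = 1" using cop by simp
  define j where "j = (u * K) mod n"
  define l0 where "l0 = (u * K) div n"
  have j_rng: "0 \<le> j" "j < n" unfolding j_def using n by auto
  have uK: "u * K = n * l0 + j" unfolding j_def l0_def by simp
  define M where "M = K * v + l0 * p"
  have jp: "j * p = K - n * M"
  proof -
    have "j * p = (u * K - n * l0) * p" using uK by simp
    also have "\<dots> = K * (u * p) - n * l0 * p" by (simp add: algebra_simps)
    also have "\<dots> = K * (1 - v * n) - n * l0 * p"
    proof -
      have "u * p = 1 - v * n" using uv1 by simp
      then show ?thesis by simp
    qed
    finally show ?thesis unfolding M_def by (simp add: algebra_simps)
  qed
  have ja: "of_int j * \<alpha> = of_int K / ?n - of_int M + of_int j * \<delta> / ?n"
  proof -
    have "of_int j * \<alpha> = (of_int (j * p) + of_int j * \<delta>) / ?n"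
      using npos by (simp add: \<delta>_def field_simps)
    also have "\<dots> = (of_int K - ?n * of_int M + of_int j * \<delta>) / ?n" by (simp add: jp)
    finally show ?thesis using npos by (simp add: field_simps)
  qed
  have yx: "y - x = (of_int K + e) / ?n" using npos by (simp add: e_def field_simps)
  have arg: "x + of_int j * \<alpha> - y = (- e / ?n + of_int j * \<delta> / ?n) - of_int M"
    using yx ja npos by (simp add: field_simps)
  have "nd (x + of_int j * \<alpha> - y) = nd (- e / ?n + of_int j * \<delta> / ?n)"
    unfolding arg by (rule nd_minus_int) simp
  also have "\<dots> \<le> \<bar>- e / ?n + of_int j * \<delta> / ?n\<bar>" by (rule nd_le_abs)
  also have "\<dots> \<le> \<bar>e\<bar> / ?n + of_int j * \<bar>\<delta>\<bar> / ?n"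
  proof -
    have e1: "- e / ?n + of_int j * \<delta> / ?n = (- e + of_int j * \<delta>) / ?n" by (simp add: diff_divide_distrib)
    have e2: "\<bar>(- e + of_int j * \<delta>) / ?n\<bar> = \<bar>- e + of_int j * \<delta>\<bar> / ?n" using npos by (simp add: abs_divide)
    have "\<bar>- e + of_int j * \<delta>\<bar> \<le> \<bar>- e\<bar> + \<bar>of_int j * \<delta>\<bar>" by (rule abs_triangle_ineq)
    also have "\<dots> = \<bar>e\<bar> + of_int j * \<bar>\<delta>\<bar>" using j_rng by (simp add: abs_mult)
    finally have "\<bar>- e + of_int j * \<delta>\<bar> / ?n \<le> (\<bar>e\<bar> + of_int j * \<bar>\<delta>\<bar>) / ?n"
      using npos by (intro divide_right_mono) auto
    then show ?thesis unfolding e1 e2 by (simp add: add_divide_distrib)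
  qed
  also have "\<dots> \<le> \<bar>e\<bar> / ?n + \<bar>\<delta>\<bar>"
  proof -
    have "of_int j * \<bar>\<delta>\<bar> \<le> ?n * \<bar>\<delta>\<bar>" using j_rng by (intro mult_right_mono) auto
    then have "of_int j * \<bar>\<delta>\<bar> / ?n \<le> \<bar>\<delta>\<bar>" using npos by (simp add: pos_divide_le_eq mult.commute)
    then show ?thesis by simp
  qed
  finally have ndb: "nd (x + of_int j * \<alpha> - y) \<le> \<bar>e\<bar> / ?n + \<bar>\<delta>\<bar>" .
  have "warped_dist \<alpha> t x y \<le> \<bar>of_int j\<bar> + t * nd (x + of_int j * \<alpha> - y)"
    by (rule W_le[OF t x y]) simp
  also have "\<dots> \<le> ?n + t * (\<bar>e\<bar> / ?n + \<bar>\<delta>\<bar>)"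
    using j_rng ndb t by (intro add_mono mult_left_mono) auto
  also have "\<dots> = (t / ?n) * \<bar>e\<bar> + t * \<bar>\<delta>\<bar> + ?n" by (simp add: algebra_simps)
  also have "\<dots> \<le> (t / ?n) * \<bar>e\<bar> + 2 * ?n" using tdel unfolding \<delta>_def by simp
  finally show ?thesis unfolding e_nd .
qed


lemma only_if_key:
  fixes \<alpha> :: real
  assumes C: "C > 0" and A: "A \<ge> 0"
    and get: "\<forall>t>0. \<exists>\<tau> f. \<tau> > 0 \<and> quasi_isometry T1 (warped_dist \<alpha> t) T2 (\<lambda>p q. \<tau> * dT2 p q) C A f"
    and t: "t > 0" and n: "n \<ge> 1" and cop: "coprime p n"
    and tdel: "t * \<bar>of_int n * \<alpha> - of_int p\<bar> \<le> of_int n"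
  shows "t / of_int n \<le> lamC C * (2 * of_int n + A + 1)"
proof -
  obtain \<tau> f where tau: "\<tau> > 0" and qi: "quasi_isometry T1 (warped_dist \<alpha> t) T2 (\<lambda>p q. \<tau> * dT2 p q) C A f"
    using get t by blast
  have npos: "real_of_int n \<ge> 1" using n by simp
  show ?thesis
  proof (rule thin[OF C A tau npos _ _ _ qi])
    show "t / of_int n > 0" using t n by simp
    show "A \<le> 2 * of_int n + A + 1" using n by simp
    show "1 \<le> 2 * of_int n + A + 1" using n A by simp
    fix x y assume x: "x \<in> T1" and y: "y \<in> T1"
    show "t / of_int n * nd (of_int n * (x - y)) \<le> warped_dist \<alpha> t x y \<and>
          warped_dist \<alpha> t x y \<le> t / of_int n * nd (of_int n * (x - y)) + (2 * of_int n + A + 1)"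
      using fiber_lower[OF t n tdel x y] fiber_upper[OF t n cop tdel x y] A by linarith
  qed
qed

lemma only_if:
  fixes \<alpha> :: real
  assumes a0: "0 < \<alpha>" and a1: "\<alpha> < 1" and qi: "warped_cone_QI_tori \<alpha>"
  shows "restricted_irrational \<alpha>"
proof -
  obtain I C A where C: "C > 0" and A: "A \<ge> 0" and I1: "fst ` I = {0<..}" and I2: "snd ` I = {0<..}"
    and H: "\<forall>(t,\<tau>)\<in>I. \<exists>f. quasi_isometry T1 (warped_dist \<alpha> t) T2 (\<lambda>p q. \<tau> * dT2 p q) C A f"
    using qi unfolding warped_cone_QI_tori_def by blast
  have get: "\<forall>t>0. \<exists>\<tau> f. \<tau> > 0 \<and> quasi_isometry T1 (warped_dist \<alpha> t) T2 (\<lambda>p q. \<tau> * dT2 p q) C A f"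
  proof (intro allI impI)
    fix t :: real assume t: "t > 0"
    have "t \<in> fst ` I" using t I1 by simp
    then obtain \<tau> where tI: "(t, \<tau>) \<in> I" by force
    then have "\<tau> \<in> snd ` I" by force
    then have tau0: "\<tau> > 0" using I2 by simp
    obtain f where qf: "quasi_isometry T1 (warped_dist \<alpha> t) T2 (\<lambda>p q. \<tau> * dT2 p q) C A f"
      using H tI by blast
    show "\<exists>\<tau> f. \<tau> > 0 \<and> quasi_isometry T1 (warped_dist \<alpha> t) T2 (\<lambda>p q. \<tau> * dT2 p q) C A f"
      using tau0 qf by (intro exI[of _ \<tau>] exI[of _ f] conjI)
  qed
  note key = only_if_key[OF C A get]
  define \<Lambda> where "\<Lambda> = lamC C"
  have irr: "\<alpha> \<notin> \<rat>"
  proof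
    assume "\<alpha> \<in> \<rat>"
    then obtain a b where b: "b > 0" and cop: "coprime a b" and ab: "\<alpha> = of_int a / of_int b"
      by (rule Rats_cases')
    define t where "t = of_int b * (\<Lambda> * (2 * of_int b + A + 1) + 1)"
    have lam0: "\<Lambda> * (2 * of_int b + A + 1) \<ge> 0"
      unfolding \<Lambda>_def lamC_def using C A b by (intro mult_nonneg_nonneg) auto
    have tpos: "t > 0" unfolding t_def using b lam0 by (intro mult_pos_pos) auto
    have "of_int b * \<alpha> - of_int a = 0" using b ab by simp
    then have "t / of_int b \<le> \<Lambda> * (2 * of_int b + A + 1)"
      using key[OF tpos _ cop] b unfolding \<Lambda>_def by simp
    moreover have "t / of_int b = \<Lambda> * (2 * of_int b + A + 1) + 1" unfolding t_def using b by simp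
    ultimately show False by simp
  qed
  define Bd where "Bd = \<Lambda> * (3 + A)"
  have coeff: "real_of_int (cf_coeff \<alpha> (Suc k)) \<le> Bd" for k
  proof -
    let ?n = "QQ \<alpha> (Suc k)" and ?p = "PP \<alpha> (Suc k)" and ?d = "dd \<alpha> (Suc k)"
    have n1: "?n \<ge> 1" by (rule QQ_pos[OF irr])
    have dnz: "?d \<noteq> 0" by (rule dd_nz[OF irr])
    have dpos: "\<bar>?d\<bar> > 0" using dnz by simp
    have cop: "coprime ?p ?n" by (rule coprime_PQ[OF irr])
    have dd_eq: "of_int ?n * \<alpha> - of_int ?p = ?d" by (simp add: dd_def)
    define t where "t = of_int ?n / \<bar>?d\<bar>"
    have tpos: "t > 0" unfolding t_def using n1 dpos by simp
    have td: "t * \<bar>of_int ?n * \<alpha> - of_int ?p\<bar> \<le> of_int ?n" unfolding dd_eq t_def using dpos by simp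
    have "t / of_int ?n \<le> \<Lambda> * (2 * of_int ?n + A + 1)"
      using key[OF tpos n1 cop td] unfolding \<Lambda>_def .
    moreover have "t / of_int ?n = 1 / \<bar>?d\<bar>" unfolding t_def using n1 by simp
    moreover have "\<Lambda> * (2 * of_int ?n + A + 1) \<le> \<Lambda> * (of_int ?n * (3 + A))"
    proof (rule mult_left_mono)
      show "0 \<le> \<Lambda>" unfolding \<Lambda>_def lamC_def using C by simp
      have "(1::real) \<le> of_int ?n" using n1 by simp
      then have "A + 1 \<le> of_int ?n * (A + 1)" using A by (simp add: mult_le_cancel_right1)
      then show "2 * of_int ?n + A + 1 \<le> of_int ?n * (3 + A)" by (simp add: algebra_simps)
    qed
    ultimately have "1 / \<bar>?d\<bar> \<le> Bd * of_int ?n" unfolding Bd_def by (simp add: algebra_simps)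
    then have one: "1 \<le> Bd * of_int ?n * \<bar>?d\<bar>" using dpos by (simp add: pos_divide_le_eq)
    have x1: "cf_rem \<alpha> (Suc k) > 1" by (rule cf_gt1[OF irr])
    have b2: "of_int ?n * \<bar>?d\<bar> * cf_rem \<alpha> (Suc k) \<le> 1" by (rule dd_bound2[OF irr])
    have "cf_rem \<alpha> (Suc k) \<le> cf_rem \<alpha> (Suc k) * (Bd * of_int ?n * \<bar>?d\<bar>)"
      using one x1 by (simp add: mult_le_cancel_left1)
    also have "\<dots> = Bd * (of_int ?n * \<bar>?d\<bar> * cf_rem \<alpha> (Suc k))" by (simp add: algebra_simps)
    also have "\<dots> \<le> Bd * 1"
    proof (rule mult_left_mono[OF b2])
      show "0 \<le> Bd" unfolding Bd_def \<Lambda>_def lamC_def using C A by simp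
    qed
    finally have "cf_rem \<alpha> (Suc k) \<le> Bd" by simp
    moreover have "of_int (cf_coeff \<alpha> (Suc k)) \<le> cf_rem \<alpha> (Suc k)" unfolding cf_coeff_def by simp
    ultimately show ?thesis by linarith
  qed
  have c0: "cf_coeff \<alpha> 0 = 0" unfolding cf_coeff_def using a0 a1 by (simp add: floor_eq_iff)
  have "\<forall>n. \<bar>cf_coeff \<alpha> n\<bar> \<le> \<lceil>Bd\<rceil>"
  proof
    fix n show "\<bar>cf_coeff \<alpha> n\<bar> \<le> \<lceil>Bd\<rceil>"
    proof (cases n)
      case 0
      have "0 \<le> Bd" unfolding Bd_def \<Lambda>_def lamC_def using C A by simp
      then show ?thesis using 0 c0 by simp
    next
      case (Suc k)
      have pos: "1 \<le> cf_coeff \<alpha> (Suc k)" by (rule cf_coeff_pos[OF irr])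
      have "real_of_int (cf_coeff \<alpha> (Suc k)) \<le> Bd" by (rule coeff)
      then have "cf_coeff \<alpha> (Suc k) \<le> \<lceil>Bd\<rceil>" by (simp add: le_ceiling_iff)
      then show ?thesis using Suc pos by simp
    qed
  qed
  then show ?thesis unfolding restricted_irrational_def using irr by blast
qed


lemma nd_jump: "m \<in> \<int> \<Longrightarrow> nd (m * (z - frac (z + c))) = nd (m * c)"
proof -
  assume m: "m \<in> \<int>"
  have e: "m * (z - frac (z + c)) = - (m * c) + m * of_int \<lfloor>z + c\<rfloor>" by (simp add: frac_def algebra_simps)
  have "nd (- (m * c) + m * of_int \<lfloor>z + c\<rfloor>) = nd (- (m * c))"
    by (rule nd_plus_int) (use m in auto)
  then show ?thesis unfolding e nd_neg .
qed

lemma nd_ff: "nd (frac u - frac v) = nd (u - v)"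
  using nd_frac[of u "frac v"] nd_frac2[of u v] by simp

lemma dT2_f: "dT2 (frac a1, frac a2) (frac b1, frac b2) = sqrt ((nd (a1 - b1))\<^sup>2 + (nd (a2 - b2))\<^sup>2)"
  by (simp add: dT2_nd nd_ff)

lemma sqrt_le_sum: "0 \<le> a \<Longrightarrow> 0 \<le> b \<Longrightarrow> sqrt (a\<^sup>2 + b\<^sup>2) \<le> a + b"
  using real_sqrt_sum_squares_triangle_ineq[of a 0 0 b] by simp

lemma if_large:
  fixes \<alpha> s Bp :: real and q p q' p' \<sigma> :: int
  assumes s1: "1 \<le> s" and Bp: "1 \<le> Bp" and hq: "1 \<le> q" "q \<le> s"
    and hq': "s < q'" "q' \<le> (Bp + 1) * s"
    and hd: "q' * \<bar>q * \<alpha> - p\<bar> \<le> 1" "q' * \<bar>q' * \<alpha> - p'\<bar> \<le> 1"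
    and det: "q' * p - q * p' = \<sigma>" and sig: "\<sigma> = 1 \<or> \<sigma> = -1"
  shows "\<exists>f. quasi_isometry T1 (warped_dist \<alpha> (s\<^sup>2)) T2 (\<lambda>a b. s * dT2 a b) (2 * (Bp + 2)) 2 f"
proof -
  define t where "t = s\<^sup>2"
  define K where "K = Bp + 2"
  define \<delta> where "\<delta> = q * \<alpha> - p"
  define \<delta>' where "\<delta>' = q' * \<alpha> - p'"
  have s0: "s > 0" using s1 by simp
  have t0: "t > 0" unfolding t_def using s0 by simp
  have ts: "t / s = s" unfolding t_def using s0 by (simp add: power2_eq_square)
  have K3: "K \<ge> 3" unfolding K_def using Bp by simp
  have q'0: "real_of_int q' > 0" using hq' s0 by linarith
  have q0: "real_of_int q > 0" using hq by simp
  have dl: "\<bar>\<delta>\<bar> \<le> 1 / s" "\<bar>\<delta>'\<bar> \<le> 1 / s"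
  proof -
    have "\<bar>\<delta>\<bar> \<le> 1 / q'" using hd(1) q'0 unfolding \<delta>_def by (simp add: field_simps)
    also have "\<dots> \<le> 1 / s" using hq' s0 by (simp add: frac_le)
    finally show "\<bar>\<delta>\<bar> \<le> 1 / s" .
    have "\<bar>\<delta>'\<bar> \<le> 1 / q'" using hd(2) q'0 unfolding \<delta>'_def by (simp add: field_simps)
    also have "\<dots> \<le> 1 / s" using hq' s0 by (simp add: frac_le)
    finally show "\<bar>\<delta>'\<bar> \<le> 1 / s" .
  qed
  have sig2: "real_of_int \<sigma> * real_of_int \<sigma> = 1" using sig by auto
  have ident: "real_of_int q * \<delta>' - real_of_int q' * \<delta> = real_of_int \<sigma>"
  proof -
    have "real_of_int q * \<delta>' - real_of_int q' * \<delta> = of_int (q' * p - q * p')"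
      unfolding \<delta>_def \<delta>'_def by (simp add: algebra_simps)
    then show ?thesis using det by simp
  qed
  define f where "f = (\<lambda>x::real. (frac (of_int q * x), frac (of_int q' * x)))"
  have fdist: "dT2 (f x) (f y) = sqrt ((nd (of_int q * (x - y)))\<^sup>2 + (nd (of_int q' * (x - y)))\<^sup>2)" for x y
    unfolding f_def dT2_f by (simp add: algebra_simps)
  have fsum: "dT2 (f x) (f y) \<le> nd (of_int q * (x - y)) + nd (of_int q' * (x - y))" for x y
    unfolding fdist by (rule sqrt_le_sum) (simp_all add: nd_nonneg)
  have fge: "nd (of_int q * (x - y)) + nd (of_int q' * (x - y)) \<le> 2 * dT2 (f x) (f y)" for x y
  proof -
    have "nd (of_int q * (x - y)) \<le> dT2 (f x) (f y)" unfolding fdist by (rule real_sqrt_sum_squares_ge1)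
    moreover have "nd (of_int q' * (x - y)) \<le> dT2 (f x) (f y)" unfolding fdist by (rule real_sqrt_sum_squares_ge2)
    ultimately show ?thesis by simp
  qed
  have Wup: "warped_dist \<alpha> t x y \<le> 2 * K * s * dT2 (f x) (f y)" if x: "x \<in> T1" and y: "y \<in> T1" for x y
  proof -
    define z where "z = x - y"
    define A1 where "A1 = round (of_int q * z)"
    define A2 where "A2 = round (of_int q' * z)"
    define a where "a = of_int q * z - of_int A1"
    define b where "b = of_int q' * z - of_int A2"
    have na: "\<bar>a\<bar> = nd (of_int q * z)" unfolding a_def A1_def nd_def ..
    have nb: "\<bar>b\<bar> = nd (of_int q' * z)" unfolding b_def A2_def nd_def ..
    define j where "j = - \<sigma> * (q' * A1 - q * A2)"
    have sz: "of_int \<sigma> * z = \<delta>' * (of_int q * z) - \<delta> * (of_int q' * z)"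
    proof -
      have "\<delta>' * (of_int q * z) - \<delta> * (of_int q' * z) = z * (of_int q * \<delta>' - of_int q' * \<delta>)"
        by (simp add: algebra_simps)
      then show ?thesis unfolding ident by simp
    qed
    also have "\<dots> = \<delta>' * (of_int A1 + a) - \<delta> * (of_int A2 + b)" by (simp add: a_def b_def)
    also have "\<dots> = \<alpha> * of_int (q' * A1 - q * A2) - of_int (p' * A1 - p * A2) + (\<delta>' * a - \<delta> * b)"
      unfolding \<delta>_def \<delta>'_def by (simp add: algebra_simps)
    finally have sz2: "of_int \<sigma> * z = \<alpha> * of_int (q' * A1 - q * A2) - of_int (p' * A1 - p * A2) + (\<delta>' * a - \<delta> * b)" .
    have "z = of_int \<sigma> * (of_int \<sigma> * z)" using sig2 by (simp add: mult.assoc[symmetric])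
    also have "\<dots> = of_int \<sigma> * (\<alpha> * of_int (q' * A1 - q * A2)) - of_int (\<sigma> * (p' * A1 - p * A2))
                   + of_int \<sigma> * (\<delta>' * a - \<delta> * b)" unfolding sz2 by (simp add: algebra_simps)
    finally have zz: "z = of_int \<sigma> * (\<alpha> * of_int (q' * A1 - q * A2)) - of_int (\<sigma> * (p' * A1 - p * A2))
                   + of_int \<sigma> * (\<delta>' * a - \<delta> * b)" .
    have arg: "x + of_int j * \<alpha> - y = of_int \<sigma> * (\<delta>' * a - \<delta> * b) - of_int (\<sigma> * (p' * A1 - p * A2))"
      using zz unfolding j_def z_def by (simp add: algebra_simps)
    have "nd (x + of_int j * \<alpha> - y) = nd (of_int \<sigma> * (\<delta>' * a - \<delta> * b))"
      unfolding arg by (rule nd_minus_int) simp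
    also have "\<dots> \<le> \<bar>of_int \<sigma> * (\<delta>' * a - \<delta> * b)\<bar>" by (rule nd_le_abs)
    also have "\<dots> = \<bar>\<delta>' * a - \<delta> * b\<bar>" using sig by (auto simp: abs_mult)
    also have "\<dots> \<le> \<bar>\<delta>'\<bar> * \<bar>a\<bar> + \<bar>\<delta>\<bar> * \<bar>b\<bar>" using abs_triangle_ineq4[of "\<delta>' * a" "\<delta> * b"] by (simp add: abs_mult)
    also have "\<dots> \<le> (1/s) * \<bar>a\<bar> + (1/s) * \<bar>b\<bar>" using dl by (intro add_mono mult_right_mono) auto
    finally have ndj: "nd (x + of_int j * \<alpha> - y) \<le> (\<bar>a\<bar> + \<bar>b\<bar>) / s" by (simp add: add_divide_distrib)
    have jabs: "\<bar>of_int j\<bar> \<le> (Bp + 1) * s * (\<bar>a\<bar> + \<bar>b\<bar>)"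
    proof -
      have "of_int (q' * A1 - q * A2) = of_int q * b - of_int q' * a"
        unfolding a_def b_def by (simp add: algebra_simps)
      then have "\<bar>of_int j\<bar> = \<bar>of_int q * b - of_int q' * a\<bar>" unfolding j_def using sig by (auto simp: abs_mult)
      also have "\<dots> \<le> of_int q * \<bar>b\<bar> + of_int q' * \<bar>a\<bar>"
        using abs_triangle_ineq4[of "of_int q * b" "of_int q' * a"] q0 q'0 by (simp add: abs_mult)
      also have "\<dots> \<le> ((Bp + 1) * s) * \<bar>b\<bar> + ((Bp + 1) * s) * \<bar>a\<bar>"
      proof (intro add_mono mult_right_mono)
        have "0 \<le> Bp * s" using Bp s0 by simp
        then have "s \<le> (Bp + 1) * s" by (simp add: algebra_simps)
        then show "of_int q \<le> (Bp + 1) * s" using hq by linarith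
      qed (use hq' in auto)
      finally show ?thesis by (simp add: algebra_simps)
    qed
    have "warped_dist \<alpha> t x y \<le> \<bar>of_int j\<bar> + t * nd (x + of_int j * \<alpha> - y)"
      by (rule W_le[OF t0 x y]) simp
    also have "\<dots> \<le> (Bp + 1) * s * (\<bar>a\<bar> + \<bar>b\<bar>) + t * ((\<bar>a\<bar> + \<bar>b\<bar>) / s)"
      using jabs ndj t0 by (intro add_mono mult_left_mono) auto
    also have "t * ((\<bar>a\<bar> + \<bar>b\<bar>) / s) = (t / s) * (\<bar>a\<bar> + \<bar>b\<bar>)" by simp
    also have "\<dots> = s * (\<bar>a\<bar> + \<bar>b\<bar>)" unfolding ts ..
    also have "(Bp + 1) * s * (\<bar>a\<bar> + \<bar>b\<bar>) + s * (\<bar>a\<bar> + \<bar>b\<bar>) = K * s * (\<bar>a\<bar> + \<bar>b\<bar>)"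
      unfolding K_def by (simp add: algebra_simps)
    also have "\<dots> \<le> K * s * (2 * dT2 (f x) (f y))"
      using fge[of x y] K3 s0 unfolding na nb z_def by (intro mult_left_mono) auto
    finally show ?thesis by (simp add: algebra_simps)
  qed
  define \<rho> where "\<rho> = (\<lambda>x y. s * dT2 (f x) (f y) / K)"
  have lip: "nd (of_int q * w) + nd (of_int q' * w) \<le> K * s * nd w" for w
  proof -
    have "nd (of_int q * w) \<le> \<bar>of_int q\<bar> * nd w" by (rule nd_mult_int) simp
    also have "\<dots> \<le> s * nd w" using hq by (intro mult_right_mono) (auto simp: nd_nonneg)
    finally have 1: "nd (of_int q * w) \<le> s * nd w" .
    have "nd (of_int q' * w) \<le> \<bar>of_int q'\<bar> * nd w" by (rule nd_mult_int) simp
    also have "\<dots> \<le> ((Bp + 1) * s) * nd w" using hq' q'0 by (intro mult_right_mono) (auto simp: nd_nonneg)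
    finally have 2: "nd (of_int q' * w) \<le> ((Bp + 1) * s) * nd w" .
    show ?thesis using 1 2 unfolding K_def by (simp add: algebra_simps)
  qed
  have pok: "pseudo_ok \<alpha> t \<rho>"
    unfolding pseudo_ok_def
  proof (intro conjI ballI)
    fix x y assume "x \<in> T1" "y \<in> T1"
    show "0 \<le> \<rho> x y" unfolding \<rho>_def using s0 K3 dT2_nonneg by simp
    show "\<rho> x y = \<rho> y x" unfolding \<rho>_def using dT2_sym by simp
    have "s * dT2 (f x) (f y) \<le> s * (K * s * nd (x - y))"
      using order_trans[OF fsum lip] s0 by (intro mult_left_mono) auto
    then have "s * dT2 (f x) (f y) / K \<le> s * s * nd (x - y)"
      using K3 by (simp add: pos_divide_le_eq algebra_simps)
    then show "\<rho> x y \<le> t * dT1 x y" unfolding \<rho>_def t_def dT1_nd by (simp add: power2_eq_square)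
  next
    fix x y z assume "x \<in> T1" "y \<in> T1" "z \<in> T1"
    have "dT2 (f x) (f z) \<le> dT2 (f x) (f y) + dT2 (f y) (f z)" by (rule dT2_triangle)
    then show "\<rho> x z \<le> \<rho> x y + \<rho> y z" unfolding \<rho>_def using s0 K3
      by (simp add: add_divide_distrib[symmetric] divide_right_mono distrib_left[symmetric] mult_left_mono)
  next
    fix z assume "z \<in> T1"
    have jb: "\<rho> z (frac (z + c)) \<le> 1" if c: "c = \<alpha> \<or> c = -\<alpha>" for c
    proof -
      have "nd (of_int q * (z - frac (z + c))) = nd (of_int q * c)" by (rule nd_jump) simp
      also have "\<dots> = nd (of_int q * \<alpha>)" using c nd_neg by auto
      also have "of_int q * \<alpha> = \<delta> + of_int p" unfolding \<delta>_def by simp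
      also have "nd (\<delta> + of_int p) = nd \<delta>" by (rule nd_plus_int) simp
      finally have 1: "nd (of_int q * (z - frac (z + c))) \<le> 1 / s" using dl nd_le_abs[of \<delta>] by linarith
      have "nd (of_int q' * (z - frac (z + c))) = nd (of_int q' * c)" by (rule nd_jump) simp
      also have "\<dots> = nd (of_int q' * \<alpha>)" using c nd_neg by auto
      also have "of_int q' * \<alpha> = \<delta>' + of_int p'" unfolding \<delta>'_def by simp
      also have "nd (\<delta>' + of_int p') = nd \<delta>'" by (rule nd_plus_int) simp
      finally have 2: "nd (of_int q' * (z - frac (z + c))) \<le> 1 / s" using dl nd_le_abs[of \<delta>'] by linarith
      have "dT2 (f z) (f (frac (z + c))) \<le> 2 / s" using fsum[of z "frac (z + c)"] 1 2 by simp
      then have "s * dT2 (f z) (f (frac (z + c))) \<le> s * (2 / s)" using s0 by (intro mult_left_mono) auto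
      then have "s * dT2 (f z) (f (frac (z + c))) \<le> 2" using s0 by simp
      then show ?thesis unfolding \<rho>_def using K3 by (simp add: pos_divide_le_eq)
    qed
    show "\<rho> z (frac (z + \<alpha>)) \<le> 1" using jb by simp
    show "\<rho> z (frac (z - \<alpha>)) \<le> 1" using jb[of "-\<alpha>"] by simp
  qed
  have Wlo: "s * dT2 (f x) (f y) \<le> K * warped_dist \<alpha> t x y" if x: "x \<in> T1" and y: "y \<in> T1" for x y
  proof -
    have "\<rho> x y \<le> warped_dist \<alpha> t x y" by (rule W_ge_pseudo[OF t0 pok x y])
    then show ?thesis unfolding \<rho>_def using K3 by (simp add: pos_divide_le_eq mult.commute)
  qed
  have surj: "\<exists>x\<in>T1. s * dT2 (f x) y \<le> 2" if y: "y \<in> T2" for y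
  proof -
    obtain y1 y2 where yy: "y = (y1, y2)" by (cases y)
    define h0 where "h0 = of_int q' * y1 - of_int q * y2"
    define N where "N = - round h0"
    define H where "H = h0 + of_int N"
    have Hb: "\<bar>H\<bar> \<le> 1/2" unfolding H_def N_def using nd_half[of h0] by (simp add: nd_def)
    define m1 where "m1 = N * \<sigma> * p"
    define m2 where "m2 = N * \<sigma> * p'"
    define Y1 where "Y1 = y1 + of_int m1"
    define Y2 where "Y2 = y2 + of_int m2"
    have HY: "of_int q' * Y1 - of_int q * Y2 = H"
    proof -
      have "of_int q' * Y1 - of_int q * Y2 = h0 + of_int (N * \<sigma> * (q' * p - q * p'))"
        unfolding Y1_def Y2_def m1_def m2_def h0_def by (simp add: algebra_simps)
      also have "\<dots> = h0 + of_int N" using det sig by auto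
      finally show ?thesis unfolding H_def .
    qed
    define z where "z = of_int \<sigma> * (\<delta>' * Y1 - \<delta> * Y2)"
    have qz: "of_int q * z = Y1 + of_int \<sigma> * \<delta> * H"
    proof -
      have "of_int q * z - (Y1 + of_int \<sigma> * \<delta> * (of_int q' * Y1 - of_int q * Y2))
          = Y1 * (of_int \<sigma> * (of_int q * \<delta>' - of_int q' * \<delta>) - 1)"
        unfolding z_def by (simp add: algebra_simps)
      also have "\<dots> = 0" unfolding ident using sig2 by simp
      finally show ?thesis unfolding HY by simp
    qed
    have q'z: "of_int q' * z = Y2 + of_int \<sigma> * \<delta>' * H"
    proof -
      have "of_int q' * z - (Y2 + of_int \<sigma> * \<delta>' * (of_int q' * Y1 - of_int q * Y2))
          = Y2 * (of_int \<sigma> * (of_int q * \<delta>' - of_int q' * \<delta>) - 1)"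
        unfolding z_def by (simp add: algebra_simps)
      also have "\<dots> = 0" unfolding ident using sig2 by simp
      finally show ?thesis unfolding HY by simp
    qed
    have xT: "frac z \<in> T1" by (rule frac_T1)
    have c1: "nd (frac (of_int q * frac z) - y1) \<le> 1 / (2 * s)"
    proof -
      have "nd (frac (of_int q * frac z) - y1) = nd (of_int q * frac z - y1)" by (rule nd_frac)
      also have "of_int q * frac z - y1 = (of_int \<sigma> * \<delta> * H + of_int m1) - of_int (q * \<lfloor>z\<rfloor>)"
        using qz unfolding frac_def Y1_def by (simp add: algebra_simps)
      also have "nd \<dots> = nd (of_int \<sigma> * \<delta> * H + of_int m1)" by (rule nd_minus_int) simp
      also have "\<dots> = nd (of_int \<sigma> * \<delta> * H)" by (rule nd_plus_int) simp
      also have "\<dots> \<le> \<bar>of_int \<sigma> * \<delta> * H\<bar>" by (rule nd_le_abs)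
      also have "\<dots> = \<bar>\<delta>\<bar> * \<bar>H\<bar>" using sig by (auto simp: abs_mult)
      also have "\<dots> \<le> (1 / s) * (1/2)" using dl Hb s0 by (intro mult_mono) auto
      finally show ?thesis by simp
    qed
    have c2: "nd (frac (of_int q' * frac z) - y2) \<le> 1 / (2 * s)"
    proof -
      have "nd (frac (of_int q' * frac z) - y2) = nd (of_int q' * frac z - y2)" by (rule nd_frac)
      also have "of_int q' * frac z - y2 = (of_int \<sigma> * \<delta>' * H + of_int m2) - of_int (q' * \<lfloor>z\<rfloor>)"
        using q'z unfolding frac_def Y2_def by (simp add: algebra_simps)
      also have "nd \<dots> = nd (of_int \<sigma> * \<delta>' * H + of_int m2)" by (rule nd_minus_int) simp
      also have "\<dots> = nd (of_int \<sigma> * \<delta>' * H)" by (rule nd_plus_int) simp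
      also have "\<dots> \<le> \<bar>of_int \<sigma> * \<delta>' * H\<bar>" by (rule nd_le_abs)
      also have "\<dots> = \<bar>\<delta>'\<bar> * \<bar>H\<bar>" using sig by (auto simp: abs_mult)
      also have "\<dots> \<le> (1 / s) * (1/2)" using dl Hb s0 by (intro mult_mono) auto
      finally show ?thesis by simp
    qed
    have "dT2 (f (frac z)) y \<le> nd (frac (of_int q * frac z) - y1) + nd (frac (of_int q' * frac z) - y2)"
      using dT2_le_sum[of "f (frac z)" y] unfolding yy f_def by (simp add: dT1_nd)
    also have "\<dots> \<le> 1 / s" using c1 c2 by simp
    finally have "s * dT2 (f (frac z)) y \<le> s * (1 / s)" using s0 by (intro mult_left_mono) auto
    then have "s * dT2 (f (frac z)) y \<le> 2" using s0 by simp
    then show ?thesis using xT by blast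
  qed
  have fT: "f ` T1 \<subseteq> T2" unfolding f_def T2_def by (auto simp: frac_lt_1)
  have "quasi_isometry T1 (warped_dist \<alpha> t) T2 (\<lambda>a b. s * dT2 a b) (2 * K) 2 f"
    unfolding quasi_isometry_def
  proof (intro conjI ballI fT)
    fix x x' assume x: "x \<in> T1" and x': "x' \<in> T1"
    have "warped_dist \<alpha> t x x' / (2 * K) \<le> s * dT2 (f x) (f x')"
      using Wup[OF x x'] K3 by (simp add: pos_divide_le_eq algebra_simps)
    then show "warped_dist \<alpha> t x x' / (2 * K) - 2 \<le> s * dT2 (f x) (f x')" by simp
    have W0: "0 \<le> warped_dist \<alpha> t x x'" by (rule W_nonneg[OF t0 x x'])
    have "K * warped_dist \<alpha> t x x' \<le> 2 * K * warped_dist \<alpha> t x x'" using W0 K3 by simp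
    then show "s * dT2 (f x) (f x') \<le> 2 * K * warped_dist \<alpha> t x x' + 2" using Wlo[OF x x'] by simp
  next
    fix y assume "y \<in> T2" then show "\<exists>x\<in>T1. s * dT2 (f x) y \<le> 2" by (rule surj)
  qed
  then show ?thesis unfolding t_def K_def by blast
qed


lemma choose_k:
  assumes irr: "\<alpha> \<notin> \<rat>" and t: "t \<ge> 1"
  shows "\<exists>k. of_int (QQ \<alpha> (Suc k)) \<le> sqrt t \<and> sqrt t < of_int (QQ \<alpha> (Suc (Suc k)))"
proof -
  define P where "P = (\<lambda>k. sqrt t < of_int (QQ \<alpha> (Suc (Suc k))))"
  define k0 where "k0 = nat \<lceil>sqrt t\<rceil> + 1"
  have "int (Suc k0) \<le> QQ \<alpha> (Suc (Suc k0)) + 1" by (rule QQ_ge[OF irr])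
  then have "of_int (int k0) \<le> (of_int (QQ \<alpha> (Suc (Suc k0))) :: real)" by linarith
  moreover have "sqrt t < real k0" unfolding k0_def by linarith
  ultimately have "P k0" unfolding P_def by simp
  then have ex: "\<exists>k. P k" by blast
  define k where "k = (LEAST k. P k)"
  have Pk: "P k" unfolding k_def by (rule LeastI_ex[OF ex])
  have "of_int (QQ \<alpha> (Suc k)) \<le> sqrt t"
  proof (cases k)
    case 0 then show ?thesis using t by simp
  next
    case (Suc k')
    have "k' < k" using Suc by simp
    then have "\<not> P k'" unfolding k_def by (rule not_less_Least)
    then show ?thesis unfolding P_def using Suc by simp
  qed
  then show ?thesis using Pk unfolding P_def by blast
qed

lemma if_dir:
  fixes \<alpha> :: real
  assumes a0: "0 < \<alpha>" and a1: "\<alpha> < 1" and r: "restricted_irrational \<alpha>"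
  shows "warped_cone_QI_tori \<alpha>"
proof -
  obtain B where irr: "\<alpha> \<notin> \<rat>" and B: "\<And>n. \<bar>cf_coeff \<alpha> n\<bar> \<le> B"
    using r unfolding restricted_irrational_def by blast
  define Bp where "Bp = max (real_of_int B) 1"
  have Bp1: "1 \<le> Bp" unfolding Bp_def by simp
  define C where "C = 2 * (Bp + 2)"
  have C0: "C > 0" unfolding C_def using Bp1 by simp
  have C6: "C \<ge> 6" unfolding C_def using Bp1 by simp
  have each: "\<exists>f. quasi_isometry T1 (warped_dist \<alpha> t) T2 (\<lambda>p q. sqrt t * dT2 p q) C 2 f"
    if t0: "t > 0" for t
  proof (cases "t \<ge> 1")
    case True
    define s where "s = sqrt t"
    have s1: "1 \<le> s" unfolding s_def using True by simp
    obtain k where k1: "of_int (QQ \<alpha> (Suc k)) \<le> s" and k2: "s < of_int (QQ \<alpha> (Suc (Suc k)))"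
      using choose_k[OF irr True] unfolding s_def by blast
    let ?q = "QQ \<alpha> (Suc k)" and ?p = "PP \<alpha> (Suc k)" and ?q' = "QQ \<alpha> (Suc (Suc k))" and ?p' = "PP \<alpha> (Suc (Suc k))"
    have hq1: "1 \<le> ?q" by (rule QQ_pos[OF irr])
    have a_le: "real_of_int (cf_coeff \<alpha> (Suc k)) \<le> Bp"
      using B[of "Suc k"] unfolding Bp_def by (smt (verit) abs_ge_self of_int_le_iff)
    have a_pos: "1 \<le> cf_coeff \<alpha> (Suc k)" by (rule cf_coeff_pos[OF irr])
    have qk: "0 \<le> QQ \<alpha> k" "QQ \<alpha> k \<le> ?q" using QQ_nonneg[OF irr] QQ_mono[OF irr] by auto
    have "real_of_int ?q' = of_int (cf_coeff \<alpha> (Suc k)) * of_int ?q + of_int (QQ \<alpha> k)" by simp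
    also have "\<dots> \<le> Bp * of_int ?q + of_int ?q"
      using a_le qk hq1 by (intro add_mono mult_right_mono) auto
    also have "\<dots> = (Bp + 1) * of_int ?q" by (simp add: algebra_simps)
    also have "\<dots> \<le> (Bp + 1) * s" using k1 Bp1 by (intro mult_left_mono) auto
    finally have hq'2: "real_of_int ?q' \<le> (Bp + 1) * s" .
    have dd1: "of_int ?q' * \<bar>of_int ?q * \<alpha> - of_int ?p\<bar> \<le> 1"
      using dd_bound[OF irr, of "Suc k"] unfolding dd_def by (simp add: mult.commute)
    have "of_int ?q' * \<bar>of_int ?q' * \<alpha> - of_int ?p'\<bar> \<le> of_int (QQ \<alpha> (Suc (Suc (Suc k)))) * \<bar>of_int ?q' * \<alpha> - of_int ?p'\<bar>"
    proof -
      have m: "real_of_int ?q' \<le> of_int (QQ \<alpha> (Suc (Suc (Suc k))))"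
        using QQ_mono[OF irr, of "Suc (Suc k)"] by (simp only: of_int_le_iff)
      show ?thesis by (rule mult_right_mono[OF m abs_ge_zero])
    qed
    also have "\<dots> \<le> 1" using dd_bound[OF irr, of "Suc (Suc k)"] unfolding dd_def by (simp add: mult.commute)
    finally have dd2: "of_int ?q' * \<bar>of_int ?q' * \<alpha> - of_int ?p'\<bar> \<le> 1" .
    have det': "?q' * ?p - ?q * ?p' = (-1) ^ Suc k" by (rule det[OF irr])
    have sig: "((-1::int) ^ Suc k) = 1 \<or> ((-1::int) ^ Suc k) = -1"
      by (cases "even (Suc k)") (auto simp: neg_one_even_power neg_one_odd_power)
    obtain f where f: "quasi_isometry T1 (warped_dist \<alpha> (s\<^sup>2)) T2 (\<lambda>a b. s * dT2 a b) (2 * (Bp + 2)) 2 f"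
      using if_large[OF s1 Bp1 _ k1 k2 hq'2 dd1 dd2 det' sig] hq1 by auto
    have "s\<^sup>2 = t" unfolding s_def using t0 by simp
    then show ?thesis using f unfolding C_def s_def by auto
  next
    case False
    define f where "f = (\<lambda>x::real. (0::real, 0::real))"
    have "quasi_isometry T1 (warped_dist \<alpha> t) T2 (\<lambda>p q. sqrt t * dT2 p q) C 2 f"
      unfolding quasi_isometry_def
    proof (intro conjI ballI)
      show "f ` T1 \<subseteq> T2" unfolding f_def T2_def by auto
      fix x x' assume x: "x \<in> T1" and x': "x' \<in> T1"
      have W0: "0 \<le> warped_dist \<alpha> t x x'" by (rule W_nonneg[OF t0 x x'])
      have "warped_dist \<alpha> t x x' \<le> t * dT1 x x'" by (rule W_le_t[OF t0 x x'])
      also have "\<dots> \<le> 1 * (1/2)" using False t0 nd_half nd_nonneg unfolding dT1_nd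
        by (intro mult_mono) auto
      finally have W1: "warped_dist \<alpha> t x x' \<le> 1/2" by simp
      have "warped_dist \<alpha> t x x' \<le> 2 * C" using W1 C6 by linarith
      then have "warped_dist \<alpha> t x x' / C \<le> 2" using C0 by (simp add: pos_divide_le_eq mult.commute)
      then show "warped_dist \<alpha> t x x' / C - 2 \<le> sqrt t * dT2 (f x) (f x')"
        unfolding f_def by (simp add: dT2_def dT1_nd nd_def)
      show "sqrt t * dT2 (f x) (f x') \<le> C * warped_dist \<alpha> t x x' + 2"
        using W0 C0 unfolding f_def by (simp add: dT2_def dT1_nd nd_def)
    next
      fix y assume "y \<in> T2"
      have "sqrt t * dT2 (f 0) y \<le> 1 * 1" using False t0 dT2_le1 dT2_nonneg
        by (intro mult_mono) auto
      then have "sqrt t * dT2 (f 0) y \<le> 2" by simp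
      moreover have "(0::real) \<in> T1" by (simp add: T1_def)
      ultimately show "\<exists>x\<in>T1. sqrt t * dT2 (f x) y \<le> 2" by blast
    qed
    then show ?thesis by blast
  qed
  define I where "I = (\<lambda>t::real. (t, sqrt t)) ` {0<..}"
  have I1: "fst ` I = {0<..}" unfolding I_def by (simp add: image_image)
  have I2: "snd ` I = {0<..}"
  proof
    show "snd ` I \<subseteq> {0<..}" unfolding I_def by auto
    show "{0<..} \<subseteq> snd ` I"
    proof
      fix \<tau> :: real assume "\<tau> \<in> {0<..}"
      then have "\<tau> > 0" by simp
      then have "(\<tau>\<^sup>2, sqrt (\<tau>\<^sup>2)) \<in> I" "sqrt (\<tau>\<^sup>2) = \<tau>" unfolding I_def by auto
      then show "\<tau> \<in> snd ` I" by (metis snd_conv image_eqI)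
    qed
  qed
  have H: "\<forall>(t,\<tau>)\<in>I. \<exists>f. quasi_isometry T1 (warped_dist \<alpha> t) T2 (\<lambda>p q. \<tau> * dT2 p q) C 2 f"
    unfolding I_def using each by auto
  show ?thesis unfolding warped_cone_QI_tori_def
    using C0 I1 I2 H by (intro exI[of _ I] exI[of _ C] exI[of _ 2]) auto
qed

theorem theoremA1:
  fixes \<alpha> :: real
  assumes "0 < \<alpha>" and "\<alpha> < 1"
  shows "warped_cone_QI_tori \<alpha> \<longleftrightarrow> restricted_irrational \<alpha>"
  using only_if[OF assms] if_dir[OF assms] by blast


end
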